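(* Let $\Sigma$ be a connected orientable compact surface with $n$ boundary components $\{1,\dots,n\}$, $T$ an ideal triangulation with edges $E$ and faces $F$, and $l^0\in\mathbb{R}_{>0}^{|E|}$ a hyperbolic metric on $(\Sigma,T)$. The combinatorial Yamabe flow $$\frac{dw_i(t)}{dt}=B_i(t),\qquad w_i(0)=0,\qquad i=1,\dots,n,$$ has a solution for $t\in[0,\infty)$. Along this flow, the initial hyperbolic surface with geodesic boundary converges to a complete hyperbolic surface with cusps (i.e. the boundary lengths $B_i(t)$ tend to $0$ and each face's right-angled hexagon converges to a hyperbolic ideal triangle as $t\to\infty$).
   Context: An ideal triangulation: glue finitely many hexagons, each with three pairwise non-adjacent sides colored red, along red sides in pairs; faces are the images of hexagons, edges the images of red sides. Each edge joins boundary components $i,j$ and is denoted $ij$; each face meets boundary components $i,j,k$ and is denoted $ijk$. A hyperbolic metric is a vector $l\in\mathbb{R}_{>0}^{|E|}$; each face $ijk$ is realized as the unique hyperbolic right-angled hexagon with pairwise non-adjacent sides of lengths $l_{jk},l_{ki},l_{ij}$, and $\theta^i_{jk}$ is the length of the side on boundary component $i$ (opposite to $jk$). For $w\in\mathbb{R}^n$, the metric $l$ is defined by $\cosh\frac{l_{ij}}{2}=e^{w_i+w_j}\cosh\frac{l^0_{ij}}{2}$ (required positive), and $B_i=\sum_{ijk\in F}\theta^i_{jk}$ is the length of boundary component $i$. *)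

theory Defs
  imports "HOL-Analysis.Analysis"
begin

text \<open>Faces are a finite set F of hexagons;
each face f has red sides (slots) (f,m), m < 3, carrying the edge  edge f m, and
boundary arcs (corners) (f,k), k < 3, the corner k being opposite to the side k.
All hexagons are oriented consistently (cyclic order 0,1,2) and the two sides carrying
the same edge are glued orientation-reversingly.  bc f k is the boundary component
containing corner (f,k).\<close>

definition glued :: "'f set \<Rightarrow> ('f \<Rightarrow> nat \<Rightarrow> 'e) \<Rightarrow> 'f \<Rightarrow> nat \<Rightarrow> 'f \<Rightarrow> nat \<Rightarrow> bool" where
  "glued F edge f m g m' \<longleftrightarrow>
     f \<in> F \<and> g \<in> F \<and> m < 3 \<and> m' < 3 \<and> (f, m) \<noteq> (g, m') \<and> edge f m = edge g m'"

text \<open>Identification of corners induced by gluing: the endpoint of side (f,m) at corner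
m+1 meets the endpoint of side (g,m') at corner m'+2, and vice versa.\<close>
definition corner_step :: "'f set \<Rightarrow> ('f \<Rightarrow> nat \<Rightarrow> 'e) \<Rightarrow> (('f \<times> nat) \<times> ('f \<times> nat)) set" where
  "corner_step F edge =
     {((f, (m + 1) mod 3), (g, (m' + 2) mod 3)) | f m g m'. glued F edge f m g m'} \<union>
     {((f, (m + 2) mod 3), (g, (m' + 1) mod 3)) | f m g m'. glued F edge f m g m'}"

definition ideal_triangulation ::
  "nat \<Rightarrow> 'f set \<Rightarrow> 'e set \<Rightarrow> ('f \<Rightarrow> nat \<Rightarrow> 'e) \<Rightarrow> ('f \<Rightarrow> nat \<Rightarrow> nat) \<Rightarrow> bool" where
  "ideal_triangulation n F E edge bc \<longleftrightarrow>
     finite F \<and> F \<noteq> {} \<and> finite E \<and>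
     (\<forall>f\<in>F. \<forall>m<3. edge f m \<in> E) \<and>
     (\<forall>e\<in>E. card {(f, m). f \<in> F \<and> m < 3 \<and> edge f m = e} = 2) \<and>
     \<comment> \<open>boundary components = classes of corners under the gluing identification\<close>
     (\<forall>f\<in>F. \<forall>k<3. \<forall>g\<in>F. \<forall>k'<3.
        ((f, k), (g, k')) \<in> (corner_step F edge)\<^sup>* \<longleftrightarrow> bc f k = bc g k') \<and>
     (\<lambda>(f, k). bc f k) ` (F \<times> {..<3}) = {1..n} \<and>
     \<comment> \<open>connectedness\<close>
     (\<forall>f\<in>F. \<forall>g\<in>F. (f, g) \<in> {(f', g'). \<exists>m m'. glued F edge f' m g' m'}\<^sup>*)"

text \<open>Length of the red side (f,m) (edge joining components bc f (m+1), bc f (m+2))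
for the conformal factor w: cosh(l/2) = e^(w_i+w_j) cosh(l0/2).\<close>
definition len_arg :: "('e \<Rightarrow> real) \<Rightarrow> ('f \<Rightarrow> nat \<Rightarrow> 'e) \<Rightarrow> ('f \<Rightarrow> nat \<Rightarrow> nat)
    \<Rightarrow> (nat \<Rightarrow> real) \<Rightarrow> 'f \<Rightarrow> nat \<Rightarrow> real" where
  "len_arg l0 edge bc w f m =
     exp (w (bc f ((m + 1) mod 3)) + w (bc f ((m + 2) mod 3))) * cosh (l0 (edge f m) / 2)"

definition edge_len :: "('e \<Rightarrow> real) \<Rightarrow> ('f \<Rightarrow> nat \<Rightarrow> 'e) \<Rightarrow> ('f \<Rightarrow> nat \<Rightarrow> nat)
    \<Rightarrow> (nat \<Rightarrow> real) \<Rightarrow> 'f \<Rightarrow> nat \<Rightarrow> real" where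
  "edge_len l0 edge bc w f m = 2 * arcosh (len_arg l0 edge bc w f m)"

text \<open>w gives a hyperbolic metric: all lengths l_ij defined and positive.\<close>
definition admissible :: "'f set \<Rightarrow> ('e \<Rightarrow> real) \<Rightarrow> ('f \<Rightarrow> nat \<Rightarrow> 'e) \<Rightarrow> ('f \<Rightarrow> nat \<Rightarrow> nat)
    \<Rightarrow> (nat \<Rightarrow> real) \<Rightarrow> bool" where
  "admissible F l0 edge bc w \<longleftrightarrow> (\<forall>f\<in>F. \<forall>m<3. len_arg l0 edge bc w f m > 1)"

text \<open>Right-angled hexagon with alternate sides a, b, c: length of the side opposite a.\<close>
definition hex_side :: "real \<Rightarrow> real \<Rightarrow> real \<Rightarrow> real" where
  "hex_side a b c = arcosh ((cosh a + cosh b * cosh c) / (sinh b * sinh c))"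

definition theta :: "('e \<Rightarrow> real) \<Rightarrow> ('f \<Rightarrow> nat \<Rightarrow> 'e) \<Rightarrow> ('f \<Rightarrow> nat \<Rightarrow> nat)
    \<Rightarrow> (nat \<Rightarrow> real) \<Rightarrow> 'f \<Rightarrow> nat \<Rightarrow> real" where
  "theta l0 edge bc w f k =
     hex_side (edge_len l0 edge bc w f k) (edge_len l0 edge bc w f ((k + 1) mod 3))
              (edge_len l0 edge bc w f ((k + 2) mod 3))"

definition bdry_len :: "'f set \<Rightarrow> ('e \<Rightarrow> real) \<Rightarrow> ('f \<Rightarrow> nat \<Rightarrow> 'e) \<Rightarrow> ('f \<Rightarrow> nat \<Rightarrow> nat)
    \<Rightarrow> (nat \<Rightarrow> real) \<Rightarrow> nat \<Rightarrow> real" where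
  "bdry_len F l0 edge bc w i =
     (\<Sum>f\<in>F. \<Sum>k<3. if bc f k = i then theta l0 edge bc w f k else 0)"

definition yamabe_solution :: "nat \<Rightarrow> 'f set \<Rightarrow> ('e \<Rightarrow> real) \<Rightarrow> ('f \<Rightarrow> nat \<Rightarrow> 'e)
    \<Rightarrow> ('f \<Rightarrow> nat \<Rightarrow> nat) \<Rightarrow> (real \<Rightarrow> nat \<Rightarrow> real) \<Rightarrow> bool" where
  "yamabe_solution n F l0 edge bc w \<longleftrightarrow>
     (\<forall>i\<in>{1..n}. w 0 i = 0) \<and>
     (\<forall>t\<ge>0. admissible F l0 edge bc (w t)) \<and>
     (\<forall>i\<in>{1..n}. \<forall>t\<ge>0.
        ((\<lambda>s. w s i) has_real_derivative bdry_len F l0 edge bc (w t) i) (at t within {0..}))"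

end

theory Submission
  imports Defs
begin


lemma cosh2_arcosh: "(x::real) \<ge> 1 \<Longrightarrow> cosh (2 * arcosh x) = 2 * x^2 - 1"
  by (simp add: cosh_double_cosh)

lemma sinh2_arcosh: "(x::real) \<ge> 1 \<Longrightarrow> sinh (2 * arcosh x) = 2 * x * sqrt (x^2 - 1)"
  by (simp add: sinh_double sinh_arcosh_real)

definition Yf :: "real \<Rightarrow> real \<Rightarrow> real \<Rightarrow> real" where
  "Yf x0 x1 x2 = (2* x0^2 - 1 + (2* x1^2-1)*(2* x2^2-1)) / (4* x1* x2* sqrt(x1^2-1)* sqrt(x2^2-1))"

lemma hex_side_Yf:
  assumes "x0 \<ge> 1" "x1 \<ge> 1" "x2 \<ge> 1"
  shows "hex_side (2* arcosh x0) (2* arcosh x1) (2* arcosh x2) = arcosh (Yf x0 x1 x2)"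
  unfolding hex_side_def Yf_def cosh2_arcosh[OF assms(1)] cosh2_arcosh[OF assms(2)]
    cosh2_arcosh[OF assms(3)] sinh2_arcosh[OF assms(2)] sinh2_arcosh[OF assms(3)]
  by (simp add: mult_ac)

lemma Yf_lower:
  assumes "x0 \<ge> 1" "x1 > 1" "x2 > 1"
  shows "Yf x0 x1 x2 - 1 \<ge> x0^2 / (4* x1^2* x2^2)"
proof -
  have xsq: "1 < x1^2" "1 < x2^2" "1 \<le> x0^2" using assms by (auto intro: one_less_power one_le_power)
  define s1 where "s1 = sqrt(x1^2-1)"
  define s2 where "s2 = sqrt(x2^2-1)"
  have s1p: "s1 > 0" "s1^2 = x1^2 - 1" using assms by (auto simp: s1_def)
  have s2p: "s2 > 0" "s2^2 = x2^2 - 1" using assms by (auto simp: s2_def)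
  have s1x: "s1 \<le> x1" using s1p assms by (smt (verit) power_mono)
  have s2x: "s2 \<le> x2" using s2p assms by (smt (verit) power_mono)
  define A where "A = 2* x1^2-1"
  define B where "B = 2* x2^2-1"
  define P where "P = 2* x1* s1"
  define Q where "Q = 2* x2* s2"
  have PA: "P \<le> A"
  proof -
    have "P^2 = 4 * x1^2 * (x1^2 - 1)" by (simp add: P_def power_mult_distrib s1p(2))
    hence "A^2 = P^2 + 1" unfolding A_def by (simp add: power2_eq_square algebra_simps)
    moreover have "A \<ge> 0" using xsq(1) unfolding A_def by linarith
    moreover have "P \<ge> 0" using assms s1p by (auto simp: P_def)
    ultimately show ?thesis by (smt (verit) power_mono)
  qed
  have QB: "Q \<le> B"
  proof -
    have "Q^2 = 4 * x2^2 * (x2^2 - 1)" by (simp add: Q_def power_mult_distrib s2p(2))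
    hence "B^2 = Q^2 + 1" unfolding B_def by (simp add: power2_eq_square algebra_simps)
    moreover have "B \<ge> 0" using xsq(2) unfolding B_def by linarith
    moreover have "Q \<ge> 0" using assms s2p by (auto simp: Q_def)
    ultimately show ?thesis by (smt (verit) power_mono)
  qed
  have Pp: "P > 0" "Q > 0" using assms s1p s2p by (auto simp: P_def Q_def)
  have "P* Q \<le> A* B" using PA QB Pp by (simp add: mult_mono)
  have PQle: "P* Q \<le> 4* x1^2* x2^2"
  proof -
    have "P \<le> 2* x1^2" unfolding P_def using s1x assms by (simp add: power2_eq_square)
    moreover have "Q \<le> 2* x2^2" unfolding Q_def using s2x assms by (simp add: power2_eq_square)
    ultimately have "P* Q \<le> (2* x1^2)*(2* x2^2)" using Pp by (intro mult_mono) auto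
    thus ?thesis by simp
  qed
  have Yd: "Yf x0 x1 x2 = (2* x0^2 - 1 + A * B)/(P * Q)"
    unfolding Yf_def A_def B_def P_def Q_def s1_def s2_def by (simp add: mult_ac)
  have Y: "Yf x0 x1 x2 - 1 = (2* x0^2 - 1 + A * B - P * Q)/(P * Q)"
    unfolding Yd using Pp by (simp add: field_simps)
  have num: "2* x0^2 - 1 + A* B - P* Q \<ge> x0^2"
    using \<open>P* Q \<le> A* B\<close> assms by (smt (verit) one_le_power)
  have "x0^2/(4* x1^2* x2^2) \<le> x0^2/(P* Q)"
    using PQle Pp xsq by (intro divide_left_mono) (auto intro!: mult_pos_pos)
  also have "\<dots> \<le> (2* x0^2 - 1 + A* B - P* Q)/(P* Q)"
    using num Pp by (intro divide_right_mono) auto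
  finally show ?thesis using Y by simp
qed

lemma Yf_upper:
  assumes "x0 \<ge> 1" "x1 > 1" "x2 > 1" "\<kappa> > 0"
    and kap: "sqrt (x1^2-1) * sqrt (x2^2-1) \<ge> \<kappa> * x1 * x2"
  shows "Yf x0 x1 x2 - 1 \<le> (x0^2 / (x1^2 * x2^2) + 1 / x1^4 + 1 / x2^4) / (2 * \<kappa>)"
proof -
  have xsq: "1 < x1^2" "1 < x2^2" "1 \<le> x0^2" using assms by (auto intro: one_less_power one_le_power)
  define s1 where "s1 = sqrt(x1^2-1)"
  define s2 where "s2 = sqrt(x2^2-1)"
  have s1p: "s1 > 0" "s1^2 = x1^2 - 1" using assms by (auto simp: s1_def)
  have s2p: "s2 > 0" "s2^2 = x2^2 - 1" using assms by (auto simp: s2_def)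
  define A where "A = 2 * x1^2-1"
  define B where "B = 2 * x2^2-1"
  define P where "P = 2 * x1 * s1"
  define Q where "Q = 2 * x2 * s2"
  have P2: "P^2 = 4 * x1^2 * (x1^2 - 1)" by (simp add: P_def power_mult_distrib s1p(2))
  have Q2: "Q^2 = 4 * x2^2 * (x2^2 - 1)" by (simp add: Q_def power_mult_distrib s2p(2))
  have A2: "A^2 = P^2 + 1" using P2 unfolding A_def by (simp add: power2_eq_square algebra_simps)
  have B2: "B^2 = Q^2 + 1" using Q2 unfolding B_def by (simp add: power2_eq_square algebra_simps)
  have Ap: "A > 0" "B > 0" using xsq unfolding A_def B_def by linarith+
  have Pp: "P > 0" "Q > 0" using assms s1p s2p by (auto simp: P_def Q_def)
  have PA: "P \<le> A" using A2 Ap Pp by (smt (verit) power_mono)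
  have QB: "Q \<le> B" using B2 Ap Pp by (smt (verit) power_mono)
  have "P * Q \<le> A * B" using PA QB Pp by (simp add: mult_mono)
  have prod0: "(A * B - P * Q) * (A * B + P * Q) = A^2 * B^2 - P^2 * Q^2"
    by (simp add: power2_eq_square algebra_simps)
  have prod: "(A * B - P * Q) * (A * B + P * Q) = A^2 + B^2 - 1"
    unfolding prod0 A2 B2 by (simp add: algebra_simps)
  have AB1: "A * B - P * Q \<le> A / B + B / A"
  proof -
    have "(A * B - P * Q) * (A * B) \<le> (A * B - P * Q) * (A * B + P * Q)"
      using \<open>P * Q \<le> A * B\<close> Pp by (intro mult_left_mono) auto
    also have "\<dots> \<le> A^2 + B^2" using prod by simp
    finally have "(A * B - P * Q) * (A * B) \<le> A^2 + B^2" .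
    hence "A * B - P * Q \<le> (A^2 + B^2) / (A * B)" using Ap by (simp add: field_simps)
    also have "\<dots> = A / B + B / A" using Ap by (simp add: field_simps power2_eq_square)
    finally show ?thesis .
  qed
  have AB: "A / B \<le> 2 * x1^2 / x2^2"
  proof -
    have "A \<le> 2 * x1^2" unfolding A_def by simp
    moreover have "x2^2 \<le> B" unfolding B_def using xsq by simp
    ultimately show ?thesis using Ap xsq by (intro frac_le) auto
  qed
  have BA: "B / A \<le> 2 * x2^2 / x1^2"
  proof -
    have "B \<le> 2 * x2^2" unfolding B_def by simp
    moreover have "x1^2 \<le> A" unfolding A_def using xsq by simp
    ultimately show ?thesis using Ap xsq by (intro frac_le) auto
  qed
  have PQge: "P * Q \<ge> 4 * \<kappa> * x1^2 * x2^2"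
  proof -
    have "P * Q = 4 * x1 * x2 * (s1 * s2)" by (simp add: P_def Q_def)
    also have "\<dots> \<ge> 4 * x1 * x2 * (\<kappa> * x1 * x2)"
      using kap assms unfolding s1_def s2_def by (intro mult_left_mono) auto
    finally show ?thesis by (simp add: power2_eq_square mult_ac)
  qed
  have Yd: "Yf x0 x1 x2 = (2 * x0^2 - 1 + A * B)/(P * Q)"
    unfolding Yf_def A_def B_def P_def Q_def s1_def s2_def by (simp add: mult_ac)
  have Y: "Yf x0 x1 x2 - 1 = (2 * x0^2 - 1 + A * B - P * Q)/(P * Q)"
    unfolding Yd using Pp by (simp add: field_simps)
  have num: "2 * x0^2 - 1 + A * B - P * Q \<le> 2 * x0^2 + 2 * x1^2 / x2^2 + 2 * x2^2 / x1^2"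
    using AB1 AB BA by linarith
  have numnn: "0 \<le> 2 * x0^2 - 1 + A * B - P * Q" using \<open>P * Q \<le> A * B\<close> xsq by linarith
  have k4: "0 < 4 * \<kappa> * x1^2 * x2^2" using assms xsq by simp
  have "Yf x0 x1 x2 - 1 \<le> (2 * x0^2 + 2 * x1^2 / x2^2 + 2 * x2^2 / x1^2) / (P * Q)"
    unfolding Y using num Pp by (intro divide_right_mono) auto
  also have "\<dots> \<le> (2 * x0^2 + 2 * x1^2 / x2^2 + 2 * x2^2 / x1^2) / (4 * \<kappa> * x1^2 * x2^2)"
    using PQge k4 xsq by (intro divide_left_mono) auto
  also have "\<dots> = (x0^2 / (x1^2 * x2^2) + 1 / x1^4 + 1 / x2^4) / (2 * \<kappa>)"
    using assms xsq by (simp add: field_simps power2_eq_square power4_eq_xxxx)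
  finally show ?thesis .
qed



definition lipb :: "'a set \<Rightarrow> ('a \<Rightarrow> 'a \<Rightarrow> real) \<Rightarrow> ('a \<Rightarrow> real) \<Rightarrow> bool" where
  "lipb S d g \<longleftrightarrow> (\<exists>L. \<forall>u\<in>S. \<forall>v\<in>S. \<bar>g u - g v\<bar> \<le> L * d u v) \<and> (\<exists>C. \<forall>u\<in>S. \<bar>g u\<bar> \<le> C)"

lemma lipb_const: "lipb S d (\<lambda>_. c)"
  unfolding lipb_def by (rule conjI, rule exI[of _ 0], simp, rule exI[of _ "\<bar>c\<bar>"], simp)

lemma lipb_add: "lipb S d g \<Longrightarrow> lipb S d h \<Longrightarrow> lipb S d (\<lambda>u. g u + h u)"
proof -
  assume g: "lipb S d g" and h: "lipb S d h"
  from g obtain L1 C1 where L1: "\<forall>u\<in>S. \<forall>v\<in>S. \<bar>g u - g v\<bar> \<le> L1 * d u v" and C1: "\<forall>u\<in>S. \<bar>g u\<bar> \<le> C1"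
    unfolding lipb_def by blast
  from h obtain L2 C2 where L2: "\<forall>u\<in>S. \<forall>v\<in>S. \<bar>h u - h v\<bar> \<le> L2 * d u v" and C2: "\<forall>u\<in>S. \<bar>h u\<bar> \<le> C2"
    unfolding lipb_def by blast
  have "\<forall>u\<in>S. \<forall>v\<in>S. \<bar>(g u + h u) - (g v + h v)\<bar> \<le> (L1 + L2) * d u v"
  proof (intro ballI)
    fix u v assume "u \<in> S" "v \<in> S"
    hence "\<bar>g u - g v\<bar> \<le> L1 * d u v" "\<bar>h u - h v\<bar> \<le> L2 * d u v" using L1 L2 by auto
    thus "\<bar>(g u + h u) - (g v + h v)\<bar> \<le> (L1 + L2) * d u v" by (simp add: algebra_simps)
  qed
  moreover have "\<forall>u\<in>S. \<bar>g u + h u\<bar> \<le> C1 + C2" using C1 C2 by (smt (verit))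
  ultimately show ?thesis unfolding lipb_def by blast
qed

lemma lipb_mult: "lipb S d g \<Longrightarrow> lipb S d h \<Longrightarrow> lipb S d (\<lambda>u. g u * h u)"
proof -
  assume g: "lipb S d g" and h: "lipb S d h"
  from g obtain L1 C1 where L1: "\<forall>u\<in>S. \<forall>v\<in>S. \<bar>g u - g v\<bar> \<le> L1 * d u v" and C1: "\<forall>u\<in>S. \<bar>g u\<bar> \<le> C1"
    unfolding lipb_def by blast
  from h obtain L2 C2 where L2: "\<forall>u\<in>S. \<forall>v\<in>S. \<bar>h u - h v\<bar> \<le> L2 * d u v" and C2: "\<forall>u\<in>S. \<bar>h u\<bar> \<le> C2"
    unfolding lipb_def by blast
  have "\<forall>u\<in>S. \<forall>v\<in>S. \<bar>g u * h u - g v * h v\<bar> \<le> (C1 * L2 + C2 * L1) * d u v"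
  proof (intro ballI)
    fix u v assume uv: "u \<in> S" "v \<in> S"
    have a: "\<bar>g u\<bar> * \<bar>h u - h v\<bar> \<le> C1 * (L2 * d u v)"
      using uv C1 L2 by (intro mult_mono) auto
    have b: "\<bar>h v\<bar> * \<bar>g u - g v\<bar> \<le> C2 * (L1 * d u v)"
      using uv C2 L1 by (intro mult_mono) auto
    have "g u * h u - g v * h v = g u * (h u - h v) + h v * (g u - g v)" by (simp add: algebra_simps)
    hence "\<bar>g u * h u - g v * h v\<bar> \<le> \<bar>g u\<bar> * \<bar>h u - h v\<bar> + \<bar>h v\<bar> * \<bar>g u - g v\<bar>"
      by (simp add: abs_mult[symmetric] abs_triangle_ineq)
    thus "\<bar>g u * h u - g v * h v\<bar> \<le> (C1 * L2 + C2 * L1) * d u v" using a b by (simp add: algebra_simps)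
  qed
  moreover have "\<forall>u\<in>S. \<bar>g u * h u\<bar> \<le> C1 * C2"
    using C1 C2 by (auto simp: abs_mult intro!: mult_mono)
  ultimately show ?thesis unfolding lipb_def by blast
qed

lemma lipb_compose:
  assumes g: "lipb S d g" and rng: "\<And>u. u \<in> S \<Longrightarrow> g u \<in> {a..b}"
    and h: "\<And>y z. y \<in> {a..b} \<Longrightarrow> z \<in> {a..b} \<Longrightarrow> \<bar>h y - h z\<bar> \<le> K * \<bar>y - z\<bar>" and K: "K \<ge> 0"
  shows "lipb S d (\<lambda>u. h (g u))"
proof -
  from g obtain L1 where L1: "\<forall>u\<in>S. \<forall>v\<in>S. \<bar>g u - g v\<bar> \<le> L1 * d u v"
    unfolding lipb_def by blast
  have "\<forall>u\<in>S. \<forall>v\<in>S. \<bar>h (g u) - h (g v)\<bar> \<le> (K * L1) * d u v"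
  proof (intro ballI)
    fix u v assume uv: "u \<in> S" "v \<in> S"
    have "\<bar>h (g u) - h (g v)\<bar> \<le> K * \<bar>g u - g v\<bar>" using h rng uv by blast
    also have "\<dots> \<le> K * (L1 * d u v)" using L1 uv K by (intro mult_left_mono) auto
    finally show "\<bar>h (g u) - h (g v)\<bar> \<le> (K * L1) * d u v" by (simp add: mult_ac)
  qed
  moreover have "\<forall>u\<in>S. \<bar>h (g u)\<bar> \<le> \<bar>h a\<bar> + K * (b - a)"
  proof
    fix u assume "u \<in> S"
    hence gu: "g u \<in> {a..b}" by (rule rng)
    hence "a \<in> {a..b}" by auto
    have "\<bar>h (g u) - h a\<bar> \<le> K * \<bar>g u - a\<bar>" using h gu \<open>a \<in> {a..b}\<close> by blast
    also have "\<dots> \<le> K * (b - a)" using gu K by (intro mult_left_mono) auto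
    finally show "\<bar>h (g u)\<bar> \<le> \<bar>h a\<bar> + K * (b - a)" by linarith
  qed
  ultimately show ?thesis unfolding lipb_def by blast
qed

lemma lipb_sum: "finite A \<Longrightarrow> (\<And>a. a \<in> A \<Longrightarrow> lipb S d (g a)) \<Longrightarrow> lipb S d (\<lambda>u. \<Sum>a\<in>A. g a u)"
proof (induction A rule: finite_induct)
  case empty thus ?case by (simp add: lipb_const)
next
  case (insert x A)
  thus ?case by (simp add: lipb_add)
qed

lemma real_lip_deriv:
  fixes h :: "real \<Rightarrow> real"
  assumes der: "\<And>x. x \<in> {a..b} \<Longrightarrow> DERIV h x :> h' x" and bd: "\<And>x. x \<in> {a..b} \<Longrightarrow> \<bar>h' x\<bar> \<le> K"
    and y: "y \<in> {a..b}" and z: "z \<in> {a..b}"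
  shows "\<bar>h y - h z\<bar> \<le> K * \<bar>y - z\<bar>"
proof -
  have main: "\<bar>h q - h p\<bar> \<le> K * \<bar>q - p\<bar>" if pq: "p \<in> {a..b}" "q \<in> {a..b}" "p < q" for p q
  proof -
    obtain c where c: "p < c" "c < q" "h q - h p = (q - p) * h' c"
      using MVT2[OF \<open>p < q\<close>, of h h'] der pq by (meson atLeastAtMost_iff order.trans)
    have cab: "c \<in> {a..b}" using c pq by auto
    have "\<bar>h q - h p\<bar> = \<bar>q - p\<bar> * \<bar>h' c\<bar>" using c by (simp add: abs_mult)
    also have "\<dots> \<le> \<bar>q - p\<bar> * K" using bd[OF cab] by (intro mult_left_mono) auto
    finally show ?thesis by (simp add: mult_ac)
  qed
  consider "y < z" | "y = z" | "z < y" by linarith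
  thus ?thesis
  proof cases
    case 1 thus ?thesis using main[OF y z] by (simp add: abs_minus_commute)
  next
    case 2 thus ?thesis using bd y by simp
  next
    case 3 thus ?thesis using main[OF z y] by simp
  qed
qed



lemma arcosh_mono_real: "1 \<le> (x::real) \<Longrightarrow> x \<le> y \<Longrightarrow> arcosh x \<le> arcosh y"
  using arcosh_less_iff_real[of y x] by (auto simp del: arcosh_less_iff_real)

lemma aux_ratio: fixes x y z p q r :: real assumes "x > 0" "y > 0" "z > 0"
  shows "(y * z * p)^2 / ((z * x * q)^2 * (x * y * r)^2) = inverse (x^4) * (p^2 / (q^2 * r^2))"
  using assms by (simp add: power_mult_distrib power2_eq_square power4_eq_xxxx divide_inverse mult_ac)
lemma exp_ratio: fixes a b c p q r :: real shows
  "(exp (b + c) * p)^2 / ((exp (c + a) * q)^2 * (exp (a + b) * r)^2) = exp (-4 * a) * (p^2 / (q^2 * r^2))"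
proof -
  have "exp (4*a) = exp a ^ 4" using exp_of_nat_mult[of 4 a] by simp
  hence e: "exp (-4 * a) = inverse (exp a ^ 4)" by (metis exp_minus mult_minus_left)
  show ?thesis unfolding e exp_add by (rule aux_ratio) auto
qed

lemma sqrt_kappa:
  assumes "c > 1" "x \<ge> c"
  shows "sqrt (x^2 - 1) \<ge> sqrt (1 - 1 / c^2) * x"
proof -
  have x0: "x > 0" using assms by simp
  have "x^2 / c^2 \<ge> 1" using assms by (simp add: power_mono)
  hence "(1 - 1/c^2) * x^2 \<le> x^2 - 1" using assms by (simp add: field_simps)
  hence "sqrt ((1 - 1/c^2) * x^2) \<le> sqrt (x^2 - 1)" by (rule real_sqrt_le_mono)
  thus ?thesis using x0 by (simp add: real_sqrt_mult)
qed

locale yam =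
  fixes n :: nat and F :: "'f set" and E :: "'e set"
    and edge :: "'f \<Rightarrow> nat \<Rightarrow> 'e" and bc :: "'f \<Rightarrow> nat \<Rightarrow> nat" and l0 :: "'e \<Rightarrow> real"
  assumes tri: "ideal_triangulation n F E edge bc"
    and l0pos: "\<forall>e\<in>E. l0 e > 0"
begin

lemma finF: "finite F" and Fne: "F \<noteq> {}" using tri unfolding ideal_triangulation_def by auto

lemma edgeE: "f \<in> F \<Longrightarrow> m < 3 \<Longrightarrow> edge f m \<in> E"
  using tri unfolding ideal_triangulation_def by auto

lemma bc_img: "(\<lambda>(f, k). bc f k) ` (F \<times> {..<3}) = {1..n}"
  using tri unfolding ideal_triangulation_def by auto

lemma bc_range: "f \<in> F \<Longrightarrow> k < 3 \<Longrightarrow> bc f k \<in> {1..n}"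
  using bc_img by auto

lemma bc_surj: assumes "i \<in> {1..n}" shows "\<exists>f\<in>F. \<exists>k<3. bc f k = i"
proof -
  have "i \<in> (\<lambda>(f, k). bc f k) ` (F \<times> {..<3})" using bc_img assms by simp
  thus ?thesis by auto
qed

lemma n_pos: "n \<ge> 1"
proof -
  obtain f where "f \<in> F" using Fne by auto
  thus ?thesis using bc_range[of f 0] by auto
qed

definition cc :: "'f \<Rightarrow> nat \<Rightarrow> real" where "cc f m = cosh (l0 (edge f m) / 2)"

lemma cc_gt1: assumes "f \<in> F" "m < 3" shows "cc f m > 1"
proof -
  have "l0 (edge f m) > 0" using l0pos edgeE[OF assms] by auto
  hence "cosh 0 < cosh (l0 (edge f m) / 2)" by (subst cosh_real_nonneg_less_iff) auto
  thus ?thesis unfolding cc_def by simp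
qed

abbreviation X :: "(nat \<Rightarrow> real) \<Rightarrow> 'f \<Rightarrow> nat \<Rightarrow> real" where
  "X v f m \<equiv> len_arg l0 edge bc v f m"

lemma X_def': "X v f m = exp (v (bc f ((m + 1) mod 3)) + v (bc f ((m + 2) mod 3))) * cc f m"
  by (simp add: len_arg_def cc_def)

lemma X1: "k < 3 \<Longrightarrow> X v f ((k + 1) mod 3) = exp (v (bc f ((k + 2) mod 3)) + v (bc f k)) * cc f ((k+1) mod 3)"
proof -
  assume "k < 3" hence "k = 0 \<or> k = 1 \<or> k = 2" by auto
  thus ?thesis by (elim disjE) (simp_all add: X_def' numeral_2_eq_2)
qed

lemma X2: "k < 3 \<Longrightarrow> X v f ((k + 2) mod 3) = exp (v (bc f k) + v (bc f ((k + 1) mod 3))) * cc f ((k+2) mod 3)"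
proof -
  assume "k < 3" hence "k = 0 \<or> k = 1 \<or> k = 2" by auto
  thus ?thesis by (elim disjE) (simp_all add: X_def' numeral_2_eq_2)
qed

lemma theta_Y:
  assumes "admissible F l0 edge bc v" "f \<in> F" "k < 3"
  shows "theta l0 edge bc v f k = arcosh (Yf (X v f k) (X v f ((k+1) mod 3)) (X v f ((k+2) mod 3)))"
proof -
  have g: "X v f m > 1" if "m < 3" for m using assms that unfolding admissible_def by auto
  have "X v f k \<ge> 1" using g[of k] assms by simp
  moreover have "X v f ((k+1) mod 3) \<ge> 1" using g[of "(k+1) mod 3"] by simp
  moreover have "X v f ((k+2) mod 3) \<ge> 1" using g[of "(k+2) mod 3"] by simp
  ultimately show ?thesis unfolding theta_def edge_len_def by (rule hex_side_Yf)
qed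

lemma ratio:
  assumes "k < 3"
  shows "(X v f k)^2 / ((X v f ((k+1) mod 3))^2 * (X v f ((k+2) mod 3))^2)
    = exp (-4 * v (bc f k)) * ((cc f k)^2 / ((cc f ((k+1) mod 3))^2 * (cc f ((k+2) mod 3))^2))"
  unfolding X1[OF assms] X2[OF assms] X_def'[of v f k] by (rule exp_ratio)

definition gam :: "'f \<Rightarrow> nat \<Rightarrow> real" where
  "gam f k = (cc f k)^2 / ((cc f ((k+1) mod 3))^2 * (cc f ((k+2) mod 3))^2) / 4"

lemma gam_pos: "f \<in> F \<Longrightarrow> k < 3 \<Longrightarrow> gam f k > 0"
  unfolding gam_def using cc_gt1[of f k] cc_gt1[of f "(k+1) mod 3"] cc_gt1[of f "(k+2) mod 3"]
  by (simp add: power_mono)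

lemma theta_lower:
  assumes adm: "admissible F l0 edge bc v" and f: "f \<in> F" and k: "k < 3"
  shows "theta l0 edge bc v f k \<ge> arcosh (1 + gam f k * exp (-4 * v (bc f k)))"
proof -
  have gt: "X v f m > 1" if "m < 3" for m using adm f that unfolding admissible_def by auto
  have "Yf (X v f k) (X v f ((k+1) mod 3)) (X v f ((k+2) mod 3)) - 1
      \<ge> (X v f k)^2 / (4 * (X v f ((k+1) mod 3))^2 * (X v f ((k+2) mod 3))^2)"
    using gt[of k] gt[of "(k+1) mod 3"] gt[of "(k+2) mod 3"] k by (intro Yf_lower) auto
  also have "(X v f k)^2 / (4 * (X v f ((k+1) mod 3))^2 * (X v f ((k+2) mod 3))^2)
      = gam f k * exp (-4 * v (bc f k))"
    using ratio[OF k, of v f] unfolding gam_def by (simp add: field_simps)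
  finally have Y: "1 + gam f k * exp (-4 * v (bc f k)) \<le> Yf (X v f k) (X v f ((k+1) mod 3)) (X v f ((k+2) mod 3))"
    by simp
  have "1 \<le> 1 + gam f k * exp (-4 * v (bc f k))" using gam_pos[OF f k] by simp
  thus ?thesis unfolding theta_Y[OF adm f k] using Y by (rule arcosh_mono_real)
qed

definition nonneg :: "(nat \<Rightarrow> real) \<Rightarrow> bool" where
  "nonneg v \<longleftrightarrow> (\<forall>j\<in>{1..n}. 0 \<le> v j)"

lemma exp_sum_ge1: "nonneg v \<Longrightarrow> f \<in> F \<Longrightarrow> m < 3 \<Longrightarrow> 1 \<le> exp (v (bc f ((m + 1) mod 3)) + v (bc f ((m + 2) mod 3)))"
proof -
  assume nn: "nonneg v" and f: "f \<in> F" and m: "m < 3"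
  have "bc f ((m + 1) mod 3) \<in> {1..n}" "bc f ((m + 2) mod 3) \<in> {1..n}" using bc_range[OF f] by auto
  hence "0 \<le> v (bc f ((m + 1) mod 3)) + v (bc f ((m + 2) mod 3))" using nn unfolding nonneg_def by auto
  thus ?thesis by simp
qed

lemma nonneg_adm: "nonneg v \<Longrightarrow> admissible F l0 edge bc v"
  unfolding admissible_def
proof (intro ballI allI impI)
  fix f and m :: nat assume nn: "nonneg v" and f: "f \<in> F" and m: "m < 3"
  have "1 * cc f m \<le> exp (v (bc f ((m + 1) mod 3)) + v (bc f ((m + 2) mod 3))) * cc f m"
    using cc_gt1[OF f m] exp_sum_ge1[OF nn f m] by (intro mult_right_mono) auto
  moreover have "cc f m > 1" using cc_gt1[OF f m] .
  ultimately show "X v f m > 1" unfolding X_def' by linarith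
qed

lemma X_ge: assumes "nonneg v" "f \<in> F" "m < 3" shows "X v f m \<ge> cc f m"
proof -
  have "1 * cc f m \<le> exp (v (bc f ((m + 1) mod 3)) + v (bc f ((m + 2) mod 3))) * cc f m"
    using cc_gt1[OF assms(2,3)] exp_sum_ge1[OF assms] by (intro mult_right_mono) auto
  thus ?thesis unfolding X_def' by simp
qed

definition kap :: "'f \<Rightarrow> nat \<Rightarrow> real" where
  "kap f k = sqrt (1 - 1 / (cc f ((k+1) mod 3))^2) * sqrt (1 - 1 / (cc f ((k+2) mod 3))^2)"

definition Cu :: "'f \<Rightarrow> nat \<Rightarrow> real" where
  "Cu f k = (4 * gam f k + 1 / (cc f ((k+1) mod 3))^4 + 1 / (cc f ((k+2) mod 3))^4) / (2 * kap f k)"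

end


lemma inv4_bound:
  fixes y a c :: real
  assumes "c > 0" "y \<ge> exp a * c"
  shows "1 / y^4 \<le> exp (-4 * a) / c^4"
proof -
  have p: "exp a * c > 0" using assms by simp
  have pw: "(exp a * c)^4 \<le> y^4" using assms p by (intro power_mono) auto
  have yp: "y > 0" using p assms by linarith
  have "1 / y^4 \<le> 1 / (exp a * c)^4" using p yp pw assms(1) by (intro divide_left_mono mult_pos_pos zero_less_power) auto
  also have "(exp a * c)^4 = exp (4 * a) * c^4"
    using exp_of_nat_mult[of 4 a] by (simp add: power_mult_distrib)
  also have "1 / (exp (4 * a) * c^4) = exp (-4 * a) / c^4"
  proof -
    have "exp (-4 * a) = inverse (exp (4 * a))" by (metis exp_minus mult_minus_left)
    thus ?thesis by (simp add: divide_inverse)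
  qed
  finally show ?thesis .
qed

lemma aux_distr: fixes e A B C D :: real shows "(e * A + e / B + e / C) / D = ((A + 1 / B + 1 / C) / D) * e"
  by (simp add: divide_inverse ring_distribs mult_ac)

context yam begin

lemma kap_pos: assumes "f \<in> F" "k < 3" shows "kap f k > 0"
proof -
  have "cc f ((k+1) mod 3) > 1" "cc f ((k+2) mod 3) > 1" using cc_gt1 assms by auto
  hence "1 / (cc f ((k+1) mod 3))^2 < 1" "1 / (cc f ((k+2) mod 3))^2 < 1"
    by (simp_all add: power_less_one_iff less_1_mult one_less_power)
  thus ?thesis unfolding kap_def by simp
qed

lemma theta_upper:
  assumes nn: "nonneg v" and f: "f \<in> F" and k: "k < 3"
  shows "theta l0 edge bc v f k \<le> arcosh (1 + Cu f k * exp (-4 * v (bc f k)))"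
proof -
  define k1 where "k1 = (k+1) mod 3"
  define k2 where "k2 = (k+2) mod 3"
  have k12: "k1 < 3" "k2 < 3" unfolding k1_def k2_def by auto
  have adm: "admissible F l0 edge bc v" using nonneg_adm[OF nn] .
  have gt: "X v f m > 1" if "m < 3" for m using adm f that unfolding admissible_def by auto
  have c1: "cc f k1 > 1" and c2: "cc f k2 > 1" using cc_gt1[OF f] k12 by auto
  have xc1: "X v f k1 \<ge> cc f k1" and xc2: "X v f k2 \<ge> cc f k2" using X_ge[OF nn f] k12 by auto
  have kp: "kap f k > 0" using kap_pos[OF f k] .
  have kapc: "sqrt ((X v f k1)^2 - 1) * sqrt ((X v f k2)^2 - 1) \<ge> kap f k * X v f k1 * X v f k2"
  proof -
    have a: "sqrt ((X v f k1)^2 - 1) \<ge> sqrt (1 - 1 / (cc f k1)^2) * X v f k1"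
      using sqrt_kappa[OF c1 xc1] .
    have b: "sqrt ((X v f k2)^2 - 1) \<ge> sqrt (1 - 1 / (cc f k2)^2) * X v f k2"
      using sqrt_kappa[OF c2 xc2] .
    have "(sqrt (1 - 1 / (cc f k1)^2) * X v f k1) * (sqrt (1 - 1 / (cc f k2)^2) * X v f k2)
       \<le> sqrt ((X v f k1)^2 - 1) * sqrt ((X v f k2)^2 - 1)"
      using a b gt[OF k12(1)] gt[OF k12(2)] c1 c2
      by (intro mult_mono) (auto simp: power_le_one_iff)
    thus ?thesis unfolding kap_def k1_def[symmetric] k2_def[symmetric] by (simp add: mult_ac)
  qed
  have U: "Yf (X v f k) (X v f k1) (X v f k2) - 1
     \<le> ((X v f k)^2 / ((X v f k1)^2 * (X v f k2)^2) + 1 / (X v f k1)^4 + 1 / (X v f k2)^4) / (2 * kap f k)"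
    using gt[OF k] gt[OF k12(1)] gt[OF k12(2)] kp kapc by (intro Yf_upper) auto
  have r: "(X v f k)^2 / ((X v f k1)^2 * (X v f k2)^2) = exp (-4 * v (bc f k)) * (4 * gam f k)"
    using ratio[OF k, of v f] unfolding gam_def k1_def k2_def by simp
  have nnb: "0 \<le> v (bc f m)" if "m < 3" for m using nn bc_range[OF f that] unfolding nonneg_def by auto
  have i1: "1 / (X v f k1)^4 \<le> exp (-4 * v (bc f k)) / (cc f k1)^4"
  proof (rule inv4_bound)
    show "cc f k1 > 0" using c1 by simp
    have "exp (v (bc f k)) \<le> exp (v (bc f k2) + v (bc f k))" using nnb[OF k12(2)] by simp
    hence "exp (v (bc f k)) * cc f k1 \<le> exp (v (bc f k2) + v (bc f k)) * cc f k1"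
      using c1 by (intro mult_right_mono) auto
    thus "X v f k1 \<ge> exp (v (bc f k)) * cc f k1" unfolding k1_def using X1[OF k, of v f] k2_def by simp
  qed
  have i2: "1 / (X v f k2)^4 \<le> exp (-4 * v (bc f k)) / (cc f k2)^4"
  proof (rule inv4_bound)
    show "cc f k2 > 0" using c2 by simp
    have "exp (v (bc f k)) \<le> exp (v (bc f k) + v (bc f k1))" using nnb[OF k12(1)] by simp
    hence "exp (v (bc f k)) * cc f k2 \<le> exp (v (bc f k) + v (bc f k1)) * cc f k2"
      using c2 by (intro mult_right_mono) auto
    thus "X v f k2 \<ge> exp (v (bc f k)) * cc f k2" unfolding k2_def using X2[OF k, of v f] k1_def by simp
  qed
  have "Yf (X v f k) (X v f k1) (X v f k2) - 1
     \<le> (exp (-4 * v (bc f k)) * (4 * gam f k) + exp (-4 * v (bc f k)) / (cc f k1)^4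
         + exp (-4 * v (bc f k)) / (cc f k2)^4) / (2 * kap f k)"
  proof -
    have "(X v f k)^2 / ((X v f k1)^2 * (X v f k2)^2) + 1 / (X v f k1)^4 + 1 / (X v f k2)^4
      \<le> exp (-4 * v (bc f k)) * (4 * gam f k) + exp (-4 * v (bc f k)) / (cc f k1)^4
         + exp (-4 * v (bc f k)) / (cc f k2)^4" unfolding r using i1 i2 by linarith
    hence "((X v f k)^2 / ((X v f k1)^2 * (X v f k2)^2) + 1 / (X v f k1)^4 + 1 / (X v f k2)^4) / (2 * kap f k)
      \<le> (exp (-4 * v (bc f k)) * (4 * gam f k) + exp (-4 * v (bc f k)) / (cc f k1)^4
         + exp (-4 * v (bc f k)) / (cc f k2)^4) / (2 * kap f k)" using kp by (intro divide_right_mono) auto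
    thus ?thesis using U by linarith
  qed
  also have "\<dots> = Cu f k * exp (-4 * v (bc f k))"
    unfolding Cu_def k1_def[symmetric] k2_def[symmetric] by (rule aux_distr)
  finally have Y: "Yf (X v f k) (X v f k1) (X v f k2) \<le> 1 + Cu f k * exp (-4 * v (bc f k))" by simp
  have "1 \<le> Yf (X v f k) (X v f k1) (X v f k2)"
  proof -
    have "Yf (X v f k) (X v f k1) (X v f k2) - 1 \<ge> (X v f k)^2 / (4 * (X v f k1)^2 * (X v f k2)^2)"
      using gt[OF k] gt[OF k12(1)] gt[OF k12(2)] by (intro Yf_lower) auto
    moreover have "0 \<le> (X v f k)^2 / (4 * (X v f k1)^2 * (X v f k2)^2)" by simp
    ultimately show ?thesis by linarith
  qed
  hence "arcosh (Yf (X v f k) (X v f k1) (X v f k2)) \<le> arcosh (1 + Cu f k * exp (-4 * v (bc f k)))"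
    using Y by (rule arcosh_mono_real)
  thus ?thesis unfolding theta_Y[OF adm f k] k1_def k2_def .
qed

end


context yam begin

abbreviation Bd :: "(nat \<Rightarrow> real) \<Rightarrow> nat \<Rightarrow> real" where
  "Bd v i \<equiv> bdry_len F l0 edge bc v i"

lemma theta_nonneg: "admissible F l0 edge bc v \<Longrightarrow> f \<in> F \<Longrightarrow> k < 3 \<Longrightarrow> 0 \<le> theta l0 edge bc v f k"
proof -
  assume a: "admissible F l0 edge bc v" "f \<in> F" "k < 3"
  have "0 \<le> arcosh (1 + gam f k * exp (-4 * v (bc f k)))"
    using gam_pos[OF a(2,3)] by (intro arcosh_nonneg_real) simp
  also have "\<dots> \<le> theta l0 edge bc v f k" using theta_lower[OF a] .
  finally show ?thesis .
qed

lemma B_nonneg: "admissible F l0 edge bc v \<Longrightarrow> 0 \<le> Bd v i"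
  unfolding bdry_len_def by (auto intro!: sum_nonneg theta_nonneg)

lemma Cu_nonneg: assumes "f \<in> F" "k < 3" shows "0 \<le> Cu f k"
proof -
  have "0 < gam f k" "0 < kap f k" using gam_pos[OF assms] kap_pos[OF assms] by auto
  moreover have "cc f ((k+1) mod 3) > 1" "cc f ((k+2) mod 3) > 1" using cc_gt1 assms by auto
  ultimately show ?thesis unfolding Cu_def by (intro divide_nonneg_pos add_nonneg_nonneg) auto
qed

definition Mb :: real where "Mb = (\<Sum>f\<in>F. \<Sum>k<3. arcosh (1 + Cu f k))"

lemma theta_le_const: assumes "nonneg v" "f \<in> F" "k < 3"
  shows "theta l0 edge bc v f k \<le> arcosh (1 + Cu f k)"
proof -
  have "0 \<le> v (bc f k)" using assms bc_range unfolding nonneg_def by auto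
  hence "exp (-4 * v (bc f k)) \<le> 1" by simp
  hence "Cu f k * exp (-4 * v (bc f k)) \<le> Cu f k"
    using Cu_nonneg[OF assms(2,3)] by (simp add: mult_left_le)
  hence "arcosh (1 + Cu f k * exp (-4 * v (bc f k))) \<le> arcosh (1 + Cu f k)"
    using Cu_nonneg[OF assms(2,3)] by (intro arcosh_mono_real) auto
  thus ?thesis using theta_upper[OF assms] by linarith
qed

lemma B_le: assumes "nonneg v" shows "Bd v i \<le> Mb"
  unfolding bdry_len_def Mb_def
proof (intro sum_mono)
  fix f k assume f: "f \<in> F" and k: "k \<in> {..<3::nat}"
  have "0 \<le> arcosh (1 + Cu f k)" using Cu_nonneg[OF f] k by (intro arcosh_nonneg_real) auto
  thus "(if bc f k = i then theta l0 edge bc v f k else 0) \<le> arcosh (1 + Cu f k)"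
    using theta_le_const[OF assms f] k by auto
qed

lemma B_ge: assumes "admissible F l0 edge bc v" "f \<in> F" "k < 3" "bc f k = i"
  shows "arcosh (1 + gam f k * exp (-4 * v i)) \<le> Bd v i"
proof -
  have "arcosh (1 + gam f k * exp (-4 * v i)) \<le> (if bc f k = i then theta l0 edge bc v f k else 0)"
    using theta_lower[OF assms(1,2,3)] assms(4) by simp
  also have "\<dots> \<le> (\<Sum>k'<3. if bc f k' = i then theta l0 edge bc v f k' else 0)"
    using assms by (intro member_le_sum) (auto intro!: theta_nonneg)
  also have "\<dots> \<le> (\<Sum>f'\<in>F. \<Sum>k'<3. if bc f' k' = i then theta l0 edge bc v f' k' else 0)"
    using assms finF by (intro member_le_sum) (auto intro!: sum_nonneg theta_nonneg)
  finally show ?thesis unfolding bdry_len_def .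
qed

lemma B_upper: assumes "nonneg v"
  shows "Bd v i \<le> (\<Sum>f\<in>F. \<Sum>k<3. if bc f k = i then arcosh (1 + Cu f k * exp (-4 * v i)) else 0)"
  unfolding bdry_len_def using theta_upper[OF assms] by (intro sum_mono) auto

end


lemma lipb_cong: "lipb S d g \<Longrightarrow> (\<And>u. u \<in> S \<Longrightarrow> g u = h u) \<Longrightarrow> lipb S d h"
  unfolding lipb_def by (metis (no_types, lifting))

lemma lipb_cmult: "lipb S d g \<Longrightarrow> lipb S d (\<lambda>u. c * g u)"
  using lipb_mult[OF lipb_const] by blast

lemma lipb_addc: "lipb S d g \<Longrightarrow> lipb S d (\<lambda>u. g u + c)"
  using lipb_add[OF _ lipb_const] by blast

lemma lipb_sq: "lipb S d g \<Longrightarrow> lipb S d (\<lambda>u. (g u)^2)"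
  by (rule lipb_cong[OF lipb_mult[of S d g g]]) (auto simp: power2_eq_square)

lemma lipb_compose_ge:
  assumes g: "lipb S d g" and lo: "\<And>u. u \<in> S \<Longrightarrow> a \<le> g u"
    and h: "\<And>b. \<exists>K\<ge>0. \<forall>y\<in>{a..b}. \<forall>z\<in>{a..b}. \<bar>h y - h z\<bar> \<le> K * \<bar>y - z\<bar>"
  shows "lipb S d (\<lambda>u. h (g u))"
proof -
  obtain C where C: "\<forall>u\<in>S. \<bar>g u\<bar> \<le> C" using g unfolding lipb_def by blast
  obtain K where K: "K \<ge> 0" "\<forall>y\<in>{a..max a C}. \<forall>z\<in>{a..max a C}. \<bar>h y - h z\<bar> \<le> K * \<bar>y - z\<bar>"
    using h by blast
  show ?thesis
  proof (rule lipb_compose[OF g, of a "max a C" h K])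
    fix u assume "u \<in> S" thus "g u \<in> {a..max a C}" using lo C by fastforce
  qed (use K in auto)
qed

lemma exp_lip: fixes a b :: real shows "\<exists>K\<ge>0. \<forall>y\<in>{a..b}. \<forall>z\<in>{a..b}. \<bar>exp y - exp z\<bar> \<le> K * \<bar>y - z\<bar>"
proof (intro exI[of _ "exp b"] conjI ballI)
  fix y z assume "y \<in> {a..b}" "z \<in> {a..b}"
  thus "\<bar>exp y - exp z\<bar> \<le> exp b * \<bar>y - z\<bar>"
    by (intro real_lip_deriv[of a b exp exp]) (auto intro: DERIV_exp)
qed simp

lemma sqrt_lip: fixes a b :: real assumes "a > 0"
  shows "\<exists>K\<ge>0. \<forall>y\<in>{a..b}. \<forall>z\<in>{a..b}. \<bar>sqrt y - sqrt z\<bar> \<le> K * \<bar>y - z\<bar>"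
proof (intro exI[of _ "inverse (sqrt a) / 2"] conjI ballI)
  fix y z assume "y \<in> {a..b}" "z \<in> {a..b}"
  thus "\<bar>sqrt y - sqrt z\<bar> \<le> inverse (sqrt a) / 2 * \<bar>y - z\<bar>"
  proof (intro real_lip_deriv[of a b sqrt "\<lambda>x. inverse (sqrt x) / 2"])
    fix x assume x: "x \<in> {a..b}"
    thus "DERIV sqrt x :> inverse (sqrt x) / 2" using assms by (intro DERIV_real_sqrt) auto
    show "\<bar>inverse (sqrt x) / 2\<bar> \<le> inverse (sqrt a) / 2" using x assms
      by (auto intro!: le_imp_inverse_le)
  qed auto
qed (use assms in simp)

lemma inv_lip: fixes a b :: real assumes "a > 0"
  shows "\<exists>K\<ge>0. \<forall>y\<in>{a..b}. \<forall>z\<in>{a..b}. \<bar>inverse y - inverse z\<bar> \<le> K * \<bar>y - z\<bar>"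
proof (intro exI[of _ "inverse a ^ 2"] conjI ballI)
  fix y z assume "y \<in> {a..b}" "z \<in> {a..b}"
  thus "\<bar>inverse y - inverse z\<bar> \<le> inverse a ^ 2 * \<bar>y - z\<bar>"
  proof (intro real_lip_deriv[of a b inverse "\<lambda>x. - (inverse x ^ Suc (Suc 0))"])
    fix x assume x: "x \<in> {a..b}"
    thus "DERIV inverse x :> - (inverse x ^ Suc (Suc 0))" using assms by (intro DERIV_inverse) auto
    have "inverse x \<le> inverse a" using x assms by (auto intro!: le_imp_inverse_le)
    moreover have "0 \<le> inverse x" using x assms by auto
    ultimately have "inverse x ^ 2 \<le> inverse a ^ 2" by (intro power_mono)
    thus "\<bar>- (inverse x ^ Suc (Suc 0))\<bar> \<le> inverse a ^ 2" by (simp add: numeral_2_eq_2)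
  qed auto
qed simp

lemma arcosh_lip: fixes a b :: real assumes "a > 1"
  shows "\<exists>K\<ge>0. \<forall>y\<in>{a..b}. \<forall>z\<in>{a..b}. \<bar>arcosh y - arcosh z\<bar> \<le> K * \<bar>y - z\<bar>"
proof (intro exI[of _ "1 / sqrt (a^2 - 1)"] conjI ballI)
  fix y z assume "y \<in> {a..b}" "z \<in> {a..b}"
  thus "\<bar>arcosh y - arcosh z\<bar> \<le> 1 / sqrt (a^2 - 1) * \<bar>y - z\<bar>"
  proof (intro real_lip_deriv[of a b arcosh "\<lambda>x. 1 / sqrt (x^2 - 1)"])
    fix x assume x: "x \<in> {a..b}"
    thus "DERIV arcosh x :> 1 / sqrt (x^2 - 1)" using assms by (intro arcosh_real_has_field_derivative) auto
    have a2: "a^2 - 1 > 0" using assms by (simp add: one_less_power)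
    have "a^2 \<le> x^2" using x assms by (intro power_mono) auto
    hence "sqrt (a^2 - 1) \<le> sqrt (x^2 - 1)" by simp
    hence "1 / sqrt (x^2 - 1) \<le> 1 / sqrt (a^2 - 1)" using a2 by (intro divide_left_mono) auto
    moreover have "0 \<le> 1 / sqrt (x^2 - 1)" using a2 \<open>a^2 \<le> x^2\<close> by simp
    ultimately show "\<bar>1 / sqrt (x^2 - 1)\<bar> \<le> 1 / sqrt (a^2 - 1)" by simp
  qed auto
qed (use assms in \<open>simp add: one_le_power\<close>)



lemma mono4: fixes a1 a2 a3 a4 b1 b2 b3 b4 :: real
  assumes "0 \<le> a1" "a1 \<le> b1" "0 \<le> a2" "a2 \<le> b2" "0 \<le> a3" "a3 \<le> b3" "0 \<le> a4" "a4 \<le> b4"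
  shows "a1 * a2 * a3 * a4 \<le> b1 * b2 * b3 * b4"
  using assms by (intro mult_mono) auto

context yam begin

definition dd :: "(nat \<Rightarrow> real) \<Rightarrow> (nat \<Rightarrow> real) \<Rightarrow> real" where
  "dd u v = Max ((\<lambda>j. \<bar>u j - v j\<bar>) ` {1..n})"

definition box :: "real \<Rightarrow> (nat \<Rightarrow> real) set" where
  "box K = {v. \<forall>j\<in>{1..n}. 0 \<le> v j \<and> v j \<le> K}"

lemma dd_ge: "j \<in> {1..n} \<Longrightarrow> \<bar>u j - v j\<bar> \<le> dd u v"
  unfolding dd_def by (intro Max_ge) auto

lemma dd_nonneg: "0 \<le> dd u v"
  using dd_ge[of 1 u v] n_pos by auto

lemma dd_le: "(\<And>j. j \<in> {1..n} \<Longrightarrow> \<bar>u j - v j\<bar> \<le> c) \<Longrightarrow> dd u v \<le> c"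
  unfolding dd_def using n_pos by (intro Max.boundedI) auto

lemma box_nonneg: "v \<in> box K \<Longrightarrow> nonneg v"
  unfolding box_def nonneg_def by auto

lemma lipb_coord: assumes j: "j \<in> {1..n}" shows "lipb (box K) dd (\<lambda>v. v j)"
proof -
  have "\<forall>u\<in>box K. \<forall>v\<in>box K. \<bar>u j - v j\<bar> \<le> 1 * dd u v" using dd_ge[OF j] by simp
  moreover have "\<forall>u\<in>box K. \<bar>u j\<bar> \<le> K" using j by (auto simp: box_def)
  ultimately show ?thesis unfolding lipb_def by blast
qed

lemma lipb_X: assumes f: "f \<in> F" and m: "m < 3" shows "lipb (box K) dd (\<lambda>v. X v f m)"
proof -
  have j: "bc f ((m + 1) mod 3) \<in> {1..n}" "bc f ((m + 2) mod 3) \<in> {1..n}" using bc_range[OF f] by auto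
  have s: "lipb (box K) dd (\<lambda>v. v (bc f ((m + 1) mod 3)) + v (bc f ((m + 2) mod 3)))"
    by (rule lipb_add[OF lipb_coord[OF j(1)] lipb_coord[OF j(2)]])
  have lo: "0 \<le> v (bc f ((m + 1) mod 3)) + v (bc f ((m + 2) mod 3))" if "v \<in> box K" for v
    using j that unfolding box_def by auto
  have "lipb (box K) dd (\<lambda>v. exp (v (bc f ((m + 1) mod 3)) + v (bc f ((m + 2) mod 3))))"
    using lipb_compose_ge[OF s lo exp_lip] .
  hence "lipb (box K) dd (\<lambda>v. cc f m * exp (v (bc f ((m + 1) mod 3)) + v (bc f ((m + 2) mod 3))))"
    by (rule lipb_cmult)
  thus ?thesis by (rule lipb_cong) (simp add: X_def' mult_ac)
qed

lemma lipb_S: assumes f: "f \<in> F" and m: "m < 3" shows "lipb (box K) dd (\<lambda>v. sqrt ((X v f m)^2 - 1))"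
proof -
  have L: "lipb (box K) dd (\<lambda>v. (X v f m)^2 + (-1))" by (rule lipb_addc[OF lipb_sq[OF lipb_X[OF f m]]])
  have lo: "(cc f m)^2 - 1 \<le> (X v f m)^2 + (-1)" if "v \<in> box K" for v
    using X_ge[OF box_nonneg[OF that] f m] cc_gt1[OF f m] by (simp add: power_mono)
  have pos: "(cc f m)^2 - 1 > 0" using cc_gt1[OF f m] by (simp add: one_less_power)
  have "lipb (box K) dd (\<lambda>v. sqrt ((X v f m)^2 + (-1)))"
    using lipb_compose_ge[OF L lo sqrt_lip[OF pos]] .
  thus ?thesis by simp
qed

lemma lipb_theta: assumes f: "f \<in> F" and k: "k < 3" and K: "K \<ge> 0"
  shows "lipb (box K) dd (\<lambda>v. theta l0 edge bc v f k)"
proof -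
  define k1 where "k1 = (k+1) mod 3"
  define k2 where "k2 = (k+2) mod 3"
  have k12: "k1 < 3" "k2 < 3" unfolding k1_def k2_def by auto
  have c1: "cc f k1 > 1" and c2: "cc f k2 > 1" using cc_gt1[OF f] k12 by auto
  define lo where "lo = 4 * cc f k1 * cc f k2 * sqrt ((cc f k1)^2 - 1) * sqrt ((cc f k2)^2 - 1)"
  have lo_pos: "lo > 0" unfolding lo_def using c1 c2 by (simp add: one_less_power)
  have X0: "lipb (box K) dd (\<lambda>v. X v f k)" using lipb_X[OF f k] .
  have X1l: "lipb (box K) dd (\<lambda>v. X v f k1)" using lipb_X[OF f k12(1)] .
  have X2l: "lipb (box K) dd (\<lambda>v. X v f k2)" using lipb_X[OF f k12(2)] .
  have t0: "lipb (box K) dd (\<lambda>v. 2 * (X v f k)^2 + (-1))" by (rule lipb_addc[OF lipb_cmult[OF lipb_sq[OF X0]]])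
  have t1: "lipb (box K) dd (\<lambda>v. 2 * (X v f k1)^2 + (-1))" by (rule lipb_addc[OF lipb_cmult[OF lipb_sq[OF X1l]]])
  have t2: "lipb (box K) dd (\<lambda>v. 2 * (X v f k2)^2 + (-1))" by (rule lipb_addc[OF lipb_cmult[OF lipb_sq[OF X2l]]])
  have N: "lipb (box K) dd (\<lambda>v. 2 * (X v f k)^2 + (-1) + (2 * (X v f k1)^2 + (-1)) * (2 * (X v f k2)^2 + (-1)))"
    by (rule lipb_add[OF t0 lipb_mult[OF t1 t2]])
  have D: "lipb (box K) dd (\<lambda>v. 4 * X v f k1 * X v f k2 * sqrt ((X v f k1)^2 - 1) * sqrt ((X v f k2)^2 - 1))"
    by (rule lipb_mult[OF lipb_mult[OF lipb_mult[OF lipb_cmult[OF X1l] X2l] lipb_S[OF f k12(1)]] lipb_S[OF f k12(2)]])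
  have Dlo: "lo \<le> 4 * X v f k1 * X v f k2 * sqrt ((X v f k1)^2 - 1) * sqrt ((X v f k2)^2 - 1)"
    if v: "v \<in> box K" for v
  proof -
    have x1: "X v f k1 \<ge> cc f k1" and x2: "X v f k2 \<ge> cc f k2" using X_ge[OF box_nonneg[OF v] f] k12 by auto
    have s1: "sqrt ((cc f k1)^2 - 1) \<le> sqrt ((X v f k1)^2 - 1)" using x1 c1 by (simp add: power_mono)
    have s2: "sqrt ((cc f k2)^2 - 1) \<le> sqrt ((X v f k2)^2 - 1)" using x2 c2 by (simp add: power_mono)
    have p1: "0 \<le> sqrt ((cc f k1)^2 - 1)" "0 \<le> sqrt ((cc f k2)^2 - 1)" using c1 c2 by (simp_all add: one_le_power)
    have "(4 * cc f k1) * cc f k2 * sqrt ((cc f k1)^2 - 1) * sqrt ((cc f k2)^2 - 1)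
       \<le> (4 * X v f k1) * X v f k2 * sqrt ((X v f k1)^2 - 1) * sqrt ((X v f k2)^2 - 1)"
      by (rule mono4) (use x1 x2 c1 c2 s1 s2 p1 in linarith)+
    thus ?thesis unfolding lo_def by simp
  qed
  have ID: "lipb (box K) dd (\<lambda>v. inverse (4 * X v f k1 * X v f k2 * sqrt ((X v f k1)^2 - 1) * sqrt ((X v f k2)^2 - 1)))"
    using lipb_compose_ge[OF D Dlo inv_lip[OF lo_pos]] .
  have Y: "lipb (box K) dd (\<lambda>v. Yf (X v f k) (X v f k1) (X v f k2))"
    by (rule lipb_cong[OF lipb_mult[OF N ID]]) (simp only: Yf_def divide_inverse diff_conv_add_uminus)
  define a where "a = 1 + gam f k * exp (-4 * K)"
  have a1: "a > 1" unfolding a_def using gam_pos[OF f k] by simp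
  have Ylo: "a \<le> Yf (X v f k) (X v f k1) (X v f k2)" if v: "v \<in> box K" for v
  proof -
    have adm: "admissible F l0 edge bc v" using nonneg_adm[OF box_nonneg[OF v]] .
    have gt: "X v f m > 1" if "m < 3" for m using adm f that unfolding admissible_def by auto
    have "Yf (X v f k) (X v f k1) (X v f k2) - 1 \<ge> (X v f k)^2 / (4 * (X v f k1)^2 * (X v f k2)^2)"
      using gt[OF k] gt[OF k12(1)] gt[OF k12(2)] by (intro Yf_lower) auto
    also have "(X v f k)^2 / (4 * (X v f k1)^2 * (X v f k2)^2) = gam f k * exp (-4 * v (bc f k))"
      using ratio[OF k, of v f] unfolding gam_def k1_def k2_def by (simp add: field_simps)
    also have "gam f k * exp (-4 * v (bc f k)) \<ge> gam f k * exp (-4 * K)"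
      using v bc_range[OF f k] gam_pos[OF f k] unfolding box_def by auto
    finally show ?thesis unfolding a_def by linarith
  qed
  have "lipb (box K) dd (\<lambda>v. arcosh (Yf (X v f k) (X v f k1) (X v f k2)))"
    using lipb_compose_ge[OF Y Ylo arcosh_lip[OF a1]] .
  thus ?thesis
  proof (rule lipb_cong)
    fix u assume u: "u \<in> box K"
    show "arcosh (Yf (X u f k) (X u f k1) (X u f k2)) = theta l0 edge bc u f k"
      using theta_Y[OF nonneg_adm[OF box_nonneg[OF u]] f k] unfolding k1_def k2_def by simp
  qed
qed

lemma lipb_B: assumes K: "K \<ge> 0" shows "lipb (box K) dd (\<lambda>v. Bd v i)"
  unfolding bdry_len_def
proof (intro lipb_sum finF finite_lessThan)
  fix f k assume "f \<in> F" "k \<in> {..<3::nat}"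
  thus "lipb (box K) dd (\<lambda>v. if bc f k = i then theta l0 edge bc v f k else 0)"
  proof (cases "bc f k = i")
    case True
    have "lipb (box K) dd (\<lambda>v. theta l0 edge bc v f k)" using lipb_theta[OF \<open>f \<in> F\<close> _ K] \<open>k \<in> {..<3}\<close> by simp
    thus ?thesis using True by simp
  next
    case False thus ?thesis by (simp add: lipb_const)
  qed
qed

lemma B_lip: assumes K: "K \<ge> 0"
  shows "\<exists>L\<ge>0. \<forall>i\<in>{1..n}. \<forall>u\<in>box K. \<forall>v\<in>box K. \<bar>Bd u i - Bd v i\<bar> \<le> L * dd u v"
proof -
  have "\<forall>i\<in>{1..n}. \<exists>L. \<forall>u\<in>box K. \<forall>v\<in>box K. \<bar>Bd u i - Bd v i\<bar> \<le> L * dd u v"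
    using lipb_B[OF K] unfolding lipb_def by blast
  then obtain Lf where Lf: "\<forall>i\<in>{1..n}. \<forall>u\<in>box K. \<forall>v\<in>box K. \<bar>Bd u i - Bd v i\<bar> \<le> Lf i * dd u v"
    by (rule bchoice[elim_format]) blast
  define L where "L = (\<Sum>i\<in>{1..n}. \<bar>Lf i\<bar>)"
  have "\<forall>i\<in>{1..n}. \<forall>u\<in>box K. \<forall>v\<in>box K. \<bar>Bd u i - Bd v i\<bar> \<le> L * dd u v"
  proof (intro ballI)
    fix i u v assume i: "i \<in> {1..n}" and uv: "u \<in> box K" "v \<in> box K"
    have "\<bar>Lf i\<bar> \<le> L" unfolding L_def using i
      by (intro member_le_sum) auto
    hence "Lf i \<le> L" by linarith
    hence "Lf i * dd u v \<le> L * dd u v" using dd_nonneg by (rule mult_right_mono)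
    moreover have "\<bar>Bd u i - Bd v i\<bar> \<le> Lf i * dd u v" using Lf i uv by blast
    ultimately show "\<bar>Bd u i - Bd v i\<bar> \<le> L * dd u v" by linarith
  qed
  moreover have "L \<ge> 0" unfolding L_def by (simp add: sum_nonneg)
  ultimately show ?thesis by blast
qed

end


lemma cont_lip:
  fixes g :: "real \<Rightarrow> real"
  assumes "\<And>s t. s \<in> S \<Longrightarrow> t \<in> S \<Longrightarrow> \<bar>g s - g t\<bar> \<le> C * \<bar>s - t\<bar>" "C \<ge> 0"
  shows "continuous_on S g"
proof (rule lipschitz_on_continuous_on)
  show "C-lipschitz_on S g"
    by (rule lipschitz_onI) (use assms in \<open>auto simp: dist_real_def\<close>)
qed

lemma int_incr:
  fixes g :: "real \<Rightarrow> real"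
  assumes cont: "continuous_on {0..t} g" and bd: "\<And>x. x \<in> {0..t} \<Longrightarrow> 0 \<le> g x \<and> g x \<le> B"
    and st: "0 \<le> s" "s \<le> t"
  shows "0 \<le> integral {0..t} g - integral {0..s} g \<and> integral {0..t} g - integral {0..s} g \<le> B * (t - s)"
proof -
  have int: "g integrable_on {0..t}" using cont by (rule integrable_continuous_real)
  have comb: "integral {0..s} g + integral {s..t} g = integral {0..t} g"
    by (rule Henstock_Kurzweil_Integration.integral_combine) (use st int in auto)
  have ist: "g integrable_on {s..t}" by (rule integrable_subinterval_real[OF int]) (use st in auto)
  have a: "0 \<le> integral {s..t} g" using ist bd st by (intro integral_nonneg) auto
  have b: "integral {s..t} g \<le> integral {s..t} (\<lambda>_. B)"
    using ist bd st by (intro integral_le) auto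
  have c: "integral {s..t} (\<lambda>_. B) = B * (t - s)" using st by simp
  show ?thesis using a b c comb by linarith
qed

lemma int_pow:
  fixes t c :: real
  assumes "t \<ge> 0"
  shows "integral {0..t} (\<lambda>s. c * s^m) = c * t^(Suc m) / Suc m"
proof -
  have "((\<lambda>s. c * s^m) has_integral ((\<lambda>s. c * s^(Suc m) / Suc m) t - (\<lambda>s. c * s^(Suc m) / Suc m) 0)) {0..t}"
  proof (rule fundamental_theorem_of_calculus)
    fix x assume "x \<in> {0..t}"
    have "((\<lambda>s. c * s^(Suc m) / Suc m) has_real_derivative c * (real (Suc m) * x^m) / Suc m) (at x within {0..t})"
      by (intro derivative_eq_intros) auto
    thus "((\<lambda>s. c * s^(Suc m) / Suc m) has_vector_derivative c * x^m) (at x within {0..t})"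
      by (simp add: has_real_derivative_iff_has_vector_derivative)
  qed (use assms in auto)
  hence h: "((\<lambda>s. c * s^m) has_integral c * t^(Suc m) / Suc m) {0..t}" by simp
  show ?thesis using integral_unique[OF h] .
qed

context yam begin

primrec P :: "nat \<Rightarrow> real \<Rightarrow> nat \<Rightarrow> real" where
  "P 0 t i = 0"
| "P (Suc k) t i = integral {0..t} (\<lambda>s. Bd (P k s) i)"

lemma nonneg0: "nonneg (\<lambda>_. 0)" unfolding nonneg_def by simp

lemma Mb_nonneg: "0 \<le> Mb"
  using B_nonneg[OF nonneg_adm[OF nonneg0], of 1] B_le[OF nonneg0, of 1] by linarith

definition good :: "(real \<Rightarrow> nat \<Rightarrow> real) \<Rightarrow> bool" where
  "good Q \<longleftrightarrow> (\<forall>j\<in>{1..n}. Q 0 j = 0) \<and>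
     (\<forall>s t j. 0 \<le> s \<longrightarrow> s \<le> t \<longrightarrow> j \<in> {1..n} \<longrightarrow> 0 \<le> Q t j - Q s j \<and> Q t j - Q s j \<le> Mb * (t - s))"

lemma good_box: assumes "good Q" "0 \<le> s" "s \<le> T" shows "Q s \<in> box (Mb * T)"
  unfolding box_def
proof (intro CollectI ballI)
  fix j assume j: "j \<in> {1..n}"
  have "0 \<le> Q s j - Q 0 j \<and> Q s j - Q 0 j \<le> Mb * (s - 0)" using assms j unfolding good_def by blast
  moreover have "Q 0 j = 0" using assms j unfolding good_def by blast
  moreover have "Mb * s \<le> Mb * T" using Mb_nonneg assms by (intro mult_left_mono) auto
  ultimately show "0 \<le> Q s j \<and> Q s j \<le> Mb * T" by auto
qed

lemma good_dd: assumes "good Q" "0 \<le> s" "0 \<le> t" shows "dd (Q s) (Q t) \<le> Mb * \<bar>s - t\<bar>"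
proof (rule dd_le)
  fix j assume j: "j \<in> {1..n}"
  show "\<bar>Q s j - Q t j\<bar> \<le> Mb * \<bar>s - t\<bar>"
  proof (cases "s \<le> t")
    case True
    hence "0 \<le> Q t j - Q s j \<and> Q t j - Q s j \<le> Mb * (t - s)" using assms j unfolding good_def by blast
    thus ?thesis using True by auto
  next
    case False
    hence "0 \<le> Q s j - Q t j \<and> Q s j - Q t j \<le> Mb * (s - t)" using assms j unfolding good_def by auto
    thus ?thesis using False by auto
  qed
qed

lemma good_range: assumes "good Q" "0 \<le> s" shows "0 \<le> Bd (Q s) i \<and> Bd (Q s) i \<le> Mb"
proof -
  have "nonneg (Q s)" using good_box[OF assms order.refl] by (rule box_nonneg)
  thus ?thesis using B_nonneg[OF nonneg_adm] B_le by blast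
qed

lemma good_cont: assumes "good Q" "0 \<le> T" "i \<in> {1..n}" shows "continuous_on {0..T} (\<lambda>s. Bd (Q s) i)"
proof -
  have "Mb * T \<ge> 0" using Mb_nonneg assms by simp
  then obtain L where L: "L \<ge> 0" "\<forall>i\<in>{1..n}. \<forall>u\<in>box (Mb * T). \<forall>v\<in>box (Mb * T). \<bar>Bd u i - Bd v i\<bar> \<le> L * dd u v"
    using B_lip by blast
  show ?thesis
  proof (rule cont_lip)
    fix s t assume st: "s \<in> {0..T}" "t \<in> {0..T}"
    have "\<bar>Bd (Q s) i - Bd (Q t) i\<bar> \<le> L * dd (Q s) (Q t)"
      using L(2) assms(3) good_box[OF assms(1)] st by auto
    also have "\<dots> \<le> L * (Mb * \<bar>s - t\<bar>)" using good_dd[OF assms(1)] st L by (intro mult_left_mono) auto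
    finally show "\<bar>Bd (Q s) i - Bd (Q t) i\<bar> \<le> (L * Mb) * \<bar>s - t\<bar>" by (simp add: mult_ac)
  qed (use L Mb_nonneg in auto)
qed

lemma good_int: assumes "good Q" shows "good (\<lambda>t i. integral {0..t} (\<lambda>s. Bd (Q s) i))"
  unfolding good_def
proof (intro conjI ballI allI impI)
  fix j :: nat assume "j \<in> {1..n}" show "integral {0..0} (\<lambda>s. Bd (Q s) j) = 0" by simp
next
  fix s t :: real and j assume st: "0 \<le> s" "s \<le> t" and j: "j \<in> {1..n}"
  have "continuous_on {0..t} (\<lambda>s. Bd (Q s) j)" using good_cont[OF assms _ j] st by auto
  moreover have "\<And>x. x \<in> {0..t} \<Longrightarrow> 0 \<le> Bd (Q x) j \<and> Bd (Q x) j \<le> Mb" using good_range[OF assms] by auto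
  ultimately have "0 \<le> integral {0..t} (\<lambda>s. Bd (Q s) j) - integral {0..s} (\<lambda>s. Bd (Q s) j) \<and>
     integral {0..t} (\<lambda>s. Bd (Q s) j) - integral {0..s} (\<lambda>s. Bd (Q s) j) \<le> Mb * (t - s)"
    using st by (rule int_incr)
  thus "0 \<le> integral {0..t} (\<lambda>s. Bd (Q s) j) - integral {0..s} (\<lambda>s. Bd (Q s) j)"
    "integral {0..t} (\<lambda>s. Bd (Q s) j) - integral {0..s} (\<lambda>s. Bd (Q s) j) \<le> Mb * (t - s)" by auto
qed

lemma good_P: "good (P k)"
proof (induction k)
  case 0 show ?case unfolding good_def using Mb_nonneg by simp
next
  case (Suc k)
  have "good (\<lambda>t i. integral {0..t} (\<lambda>s. Bd (P k s) i))" using good_int[OF Suc] .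
  moreover have "(\<lambda>t i. integral {0..t} (\<lambda>s. Bd (P k s) i)) = P (Suc k)" by (intro ext) simp
  ultimately show ?case by simp
qed

definition bb :: "real \<Rightarrow> real \<Rightarrow> nat \<Rightarrow> real" where
  "bb T L k = Mb * L^k * T^(Suc k) / fact (Suc k)"

lemma pic_est:
  assumes T: "0 \<le> T" and L: "0 \<le> L"
    and Lip: "\<forall>i\<in>{1..n}. \<forall>u\<in>box (Mb * T). \<forall>v\<in>box (Mb * T). \<bar>Bd u i - Bd v i\<bar> \<le> L * dd u v"
  shows "\<forall>t\<in>{0..T}. \<forall>i\<in>{1..n}. \<bar>P (Suc k) t i - P k t i\<bar> \<le> bb t L k"
proof (induction k)
  case 0
  show ?case
  proof (intro ballI)
    fix t i assume t: "t \<in> {0..T}" and i: "i \<in> {1..n}"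
    have "0 \<le> P 1 t i - P 1 0 i \<and> P 1 t i - P 1 0 i \<le> Mb * (t - 0)"
      using good_P[of 1] t i unfolding good_def by auto
    moreover have "P 1 0 i = 0" by simp
    ultimately show "\<bar>P (Suc 0) t i - P 0 t i\<bar> \<le> bb t L 0" unfolding bb_def by simp
  qed
next
  case (Suc k)
  show ?case
  proof (intro ballI)
    fix t i assume t: "t \<in> {0..T}" and i: "i \<in> {1..n}"
    have c1: "continuous_on {0..t} (\<lambda>s. Bd (P (Suc k) s) i)" using good_cont[OF good_P _ i] t by auto
    have c0: "continuous_on {0..t} (\<lambda>s. Bd (P k s) i)" using good_cont[OF good_P _ i] t by auto
    have i1: "(\<lambda>s. Bd (P (Suc k) s) i) integrable_on {0..t}" using c1 by (rule integrable_continuous_real)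
    have i0: "(\<lambda>s. Bd (P k s) i) integrable_on {0..t}" using c0 by (rule integrable_continuous_real)
    have eq: "P (Suc (Suc k)) t i - P (Suc k) t i = integral {0..t} (\<lambda>s. Bd (P (Suc k) s) i - Bd (P k s) i)"
      using integral_diff[OF i1 i0] by simp
    define c where "c = L * (Mb * L^k / fact (Suc k))"
    have pw: "\<bar>Bd (P (Suc k) s) i - Bd (P k s) i\<bar> \<le> c * s^(Suc k)" if s: "s \<in> {0..t}" for s
    proof -
      have sT: "s \<in> {0..T}" using s t by auto
      have "\<bar>Bd (P (Suc k) s) i - Bd (P k s) i\<bar> \<le> L * dd (P (Suc k) s) (P k s)"
        using Lip i good_box[OF good_P, of s T] sT by auto
      also have "dd (P (Suc k) s) (P k s) \<le> bb s L k"
        using Suc.IH sT by (intro dd_le) auto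
      hence "L * dd (P (Suc k) s) (P k s) \<le> L * bb s L k" using L by (rule mult_left_mono)
      also have "L * bb s L k = c * s^(Suc k)" unfolding bb_def c_def by simp
      finally show ?thesis .
    qed
    have ip: "(\<lambda>s. c * s^(Suc k)) integrable_on {0..t}"
      by (intro integrable_continuous_real continuous_intros)
    have "\<bar>P (Suc (Suc k)) t i - P (Suc k) t i\<bar> \<le> integral {0..t} (\<lambda>s. c * s^(Suc k))"
      unfolding eq using integral_diff[OF i1 i0] i1 i0 ip pw
      by (intro integral_norm_bound_integral[of "\<lambda>s. Bd (P (Suc k) s) i - Bd (P k s) i", simplified])
        (auto intro: integrable_diff)
    also have "\<dots> = c * t^(Suc (Suc k)) / Suc (Suc k)" using t by (intro int_pow) auto
    also have "\<dots> = bb t L (Suc k)" unfolding c_def bb_def by (simp add: field_simps)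
    finally show "\<bar>P (Suc (Suc k)) t i - P (Suc k) t i\<bar> \<le> bb t L (Suc k)" .
  qed
qed

end


context yam begin

lemma bb_nonneg: "0 \<le> T \<Longrightarrow> 0 \<le> L \<Longrightarrow> 0 \<le> bb T L k"
  unfolding bb_def using Mb_nonneg by simp

lemma bb_mono: "0 \<le> t \<Longrightarrow> t \<le> T \<Longrightarrow> 0 \<le> L \<Longrightarrow> bb t L k \<le> bb T L k"
  unfolding bb_def using Mb_nonneg
  by (intro divide_right_mono mult_left_mono power_mono) auto

lemma bb_summable: assumes "0 \<le> T" "0 \<le> L" shows "summable (bb T L)"
proof (rule summable_comparison_test')
  show "summable (\<lambda>k. (Mb * T) * (inverse (fact k) * (L * T)^k))"
    by (intro summable_mult summable_exp)
next
  fix k :: nat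
  have e: "bb T L k = (Mb * T * (L * T)^k) / fact (Suc k)"
    unfolding bb_def by (simp add: power_mult_distrib mult_ac)
  have x: "0 \<le> Mb * T * (L * T)^k" using assms Mb_nonneg by simp
  have "(Mb * T * (L * T)^k) / fact (Suc k) \<le> (Mb * T * (L * T)^k) / fact k"
    using x by (intro divide_left_mono) (auto simp: fact_mono)
  also have "\<dots> = (Mb * T) * (inverse (fact k) * (L * T)^k)" by (simp add: divide_inverse mult_ac)
  finally have "bb T L k \<le> (Mb * T) * (inverse (fact k) * (L * T)^k)" using e by simp
  thus "norm (bb T L k) \<le> (Mb * T) * (inverse (fact k) * (L * T)^k)"
    using bb_nonneg[OF assms, of k] by simp
qed

definition w :: "real \<Rightarrow> nat \<Rightarrow> real" where
  "w t i = (\<Sum>k. P (Suc k) t i - P k t i)"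

lemma Lip_ex: assumes "0 \<le> T"
  shows "\<exists>L\<ge>0. \<forall>i\<in>{1..n}. \<forall>u\<in>box (Mb * T). \<forall>v\<in>box (Mb * T). \<bar>Bd u i - Bd v i\<bar> \<le> L * dd u v"
  using B_lip[of "Mb * T"] Mb_nonneg assms by simp

definition R :: "real \<Rightarrow> real \<Rightarrow> nat \<Rightarrow> real" where
  "R T L k = suminf (bb T L) - (\<Sum>j<k. bb T L j)"

lemma R_lim: "0 \<le> T \<Longrightarrow> 0 \<le> L \<Longrightarrow> R T L \<longlonglongrightarrow> 0"
proof -
  assume a: "0 \<le> T" "0 \<le> L"
  have "(\<lambda>k. suminf (bb T L) - (\<Sum>j<k. bb T L j)) \<longlonglongrightarrow> suminf (bb T L) - suminf (bb T L)"
    by (intro tendsto_diff tendsto_const summable_LIMSEQ bb_summable a)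
  thus ?thesis unfolding R_def by simp
qed

lemma conv:
  assumes T: "0 \<le> T" and L: "0 \<le> L"
    and Lip: "\<forall>i\<in>{1..n}. \<forall>u\<in>box (Mb * T). \<forall>v\<in>box (Mb * T). \<bar>Bd u i - Bd v i\<bar> \<le> L * dd u v"
    and t: "t \<in> {0..T}" and i: "i \<in> {1..n}"
  shows "(\<lambda>k. P k t i) \<longlonglongrightarrow> w t i" and "\<bar>w t i - P k t i\<bar> \<le> R T L k"
proof -
  define d where "d j = P (Suc j) t i - P j t i" for j
  have db: "\<bar>d j\<bar> \<le> bb T L j" for j
  proof -
    have "\<bar>d j\<bar> \<le> bb t L j" using pic_est[OF T L Lip, of j] t i unfolding d_def by blast
    also have "\<dots> \<le> bb T L j" using bb_mono[of t T L j] t L by auto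
    finally show ?thesis .
  qed
  have sd: "summable d" by (rule summable_comparison_test'[OF bb_summable[OF T L]]) (use db in auto)
  have ps: "(\<Sum>j<k. d j) = P k t i" for k
    unfolding d_def by (subst sum_lessThan_telescope) simp
  have l0: "(\<lambda>k. P k t i) \<longlonglongrightarrow> suminf d"
    using summable_LIMSEQ[OF sd] by (simp only: ps)
  have "suminf d = w t i" unfolding w_def d_def by simp
  hence lim: "(\<lambda>k. P k t i) \<longlonglongrightarrow> w t i" using l0 by simp
  thus "(\<lambda>k. P k t i) \<longlonglongrightarrow> w t i" .
  have tail: "\<bar>P m t i - P k t i\<bar> \<le> (\<Sum>j\<in>{k..<m}. bb T L j)" if "k \<le> m" for m
    using that
  proof (induction m rule: dec_induct)
    case base thus ?case by simp
  next
    case (step m)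
    have "\<bar>P (Suc m) t i - P k t i\<bar> \<le> \<bar>d m\<bar> + \<bar>P m t i - P k t i\<bar>" unfolding d_def by linarith
    also have "\<dots> \<le> bb T L m + (\<Sum>j\<in>{k..<m}. bb T L j)" using db[of m] step.IH by linarith
    also have "\<dots> = (\<Sum>j\<in>{k..<Suc m}. bb T L j)" using step.hyps by (simp add: sum.atLeastLessThan_Suc)
    finally show ?case .
  qed
  have tail2: "(\<Sum>j\<in>{k..<m}. bb T L j) \<le> R T L k" if "k \<le> m" for m
  proof -
    have "(\<Sum>j<k. bb T L j) + (\<Sum>j\<in>{k..<m}. bb T L j) = (\<Sum>j<m. bb T L j)"
      using sum.atLeastLessThan_concat[of 0 k m "bb T L"] that by (simp add: atLeast0LessThan)
    moreover have "(\<Sum>j<m. bb T L j) \<le> suminf (bb T L)"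
      using bb_summable[OF T L] bb_nonneg[OF T L] by (intro sum_le_suminf) auto
    ultimately show ?thesis unfolding R_def by linarith
  qed
  have "(\<lambda>m. \<bar>P m t i - P k t i\<bar>) \<longlonglongrightarrow> \<bar>w t i - P k t i\<bar>"
    by (intro tendsto_rabs tendsto_diff lim tendsto_const)
  moreover have "\<exists>N. \<forall>m\<ge>N. \<bar>P m t i - P k t i\<bar> \<le> R T L k"
    using tail tail2 by (intro exI[of _ k]) (blast intro: order.trans)
  ultimately show "\<bar>w t i - P k t i\<bar> \<le> R T L k" by (rule LIMSEQ_le_const2)
qed

lemma P_zero: "P k 0 i = 0" by (cases k) simp_all

lemma good_w: "good w"
  unfolding good_def
proof (intro conjI ballI allI impI)
  fix j :: nat show "w 0 j = 0" unfolding w_def by (simp add: P_zero)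
next
  fix s t :: real and j assume st: "0 \<le> s" "s \<le> t" and j: "j \<in> {1..n}"
  obtain L where L: "L \<ge> 0" "\<forall>i\<in>{1..n}. \<forall>u\<in>box (Mb * t). \<forall>v\<in>box (Mb * t). \<bar>Bd u i - Bd v i\<bar> \<le> L * dd u v"
    using Lip_ex[of t] st by auto
  have lt: "(\<lambda>k. P k t j) \<longlonglongrightarrow> w t j" using conv(1)[OF _ L(1) L(2), of t j] st j by auto
  have ls: "(\<lambda>k. P k s j) \<longlonglongrightarrow> w s j" using conv(1)[OF _ L(1) L(2), of s j] st j by auto
  have ld: "(\<lambda>k. P k t j - P k s j) \<longlonglongrightarrow> w t j - w s j" by (intro tendsto_diff lt ls)
  have b: "0 \<le> P k t j - P k s j \<and> P k t j - P k s j \<le> Mb * (t - s)" for k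
    using good_P[of k] st j unfolding good_def by blast
  show "0 \<le> w t j - w s j" using ld by (rule LIMSEQ_le_const) (use b in auto)
  show "w t j - w s j \<le> Mb * (t - s)" using ld by (rule LIMSEQ_le_const2) (use b in auto)
qed

end


context yam begin

lemma w_int: assumes t: "0 \<le> t" and i: "i \<in> {1..n}"
  shows "w t i = integral {0..t} (\<lambda>s. Bd (w s) i)"
proof -
  obtain L where L: "L \<ge> 0" "\<forall>i\<in>{1..n}. \<forall>u\<in>box (Mb * t). \<forall>v\<in>box (Mb * t). \<bar>Bd u i - Bd v i\<bar> \<le> L * dd u v"
    using Lip_ex[OF t] by auto
  define I where "I = integral {0..t} (\<lambda>s. Bd (w s) i)"
  have cw: "continuous_on {0..t} (\<lambda>s. Bd (w s) i)" using good_cont[OF good_w t i] .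
  have iw: "(\<lambda>s. Bd (w s) i) integrable_on {0..t}" using cw by (rule integrable_continuous_real)
  have E: "\<bar>I - P (Suc k) t i\<bar> \<le> t * (L * R t L k)" for k
  proof -
    have cp: "continuous_on {0..t} (\<lambda>s. Bd (P k s) i)" using good_cont[OF good_P t i] .
    have ip: "(\<lambda>s. Bd (P k s) i) integrable_on {0..t}" using cp by (rule integrable_continuous_real)
    have eq: "I - P (Suc k) t i = integral {0..t} (\<lambda>s. Bd (w s) i - Bd (P k s) i)"
      unfolding I_def using integral_diff[OF iw ip] by simp
    have pw: "norm (Bd (w s) i - Bd (P k s) i) \<le> L * R t L k" if s: "s \<in> {0..t}" for s
    proof -
      have "\<bar>Bd (w s) i - Bd (P k s) i\<bar> \<le> L * dd (w s) (P k s)"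
        using L(2) i good_box[OF good_w, of s t] good_box[OF good_P, of s t] s by auto
      also have "dd (w s) (P k s) \<le> R t L k"
        using conv(2)[OF t L(1) L(2) s] by (intro dd_le) auto
      hence "L * dd (w s) (P k s) \<le> L * R t L k" using L(1) by (rule mult_left_mono)
      finally show ?thesis by simp
    qed
    have "norm (integral {0..t} (\<lambda>s. Bd (w s) i - Bd (P k s) i)) \<le> integral {0..t} (\<lambda>s. L * R t L k)"
      by (rule integral_norm_bound_integral) (use iw ip pw in \<open>auto intro: integrable_diff\<close>)
    also have "\<dots> = t * (L * R t L k)" using t by simp
    finally show ?thesis unfolding eq by simp
  qed
  have bnd: "\<bar>w t i - I\<bar> \<le> R t L (Suc k) + t * (L * R t L k)" for k
  proof -
    have "t \<in> {0..t}" using t by simp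
    hence "\<bar>w t i - P (Suc k) t i\<bar> \<le> R t L (Suc k)" by (rule conv(2)[OF t L(1) L(2) _ i])
    thus ?thesis using E[of k] by linarith
  qed
  have lim: "(\<lambda>k. R t L (Suc k) + t * (L * R t L k)) \<longlonglongrightarrow> 0 + t * (L * 0)"
    using R_lim[OF t L(1)] by (intro tendsto_add tendsto_mult tendsto_const) (simp_all add: LIMSEQ_Suc)
  hence lim0: "(\<lambda>k. R t L (Suc k) + t * (L * R t L k)) \<longlonglongrightarrow> 0" by simp
  have "\<bar>w t i - I\<bar> \<le> 0" by (rule LIMSEQ_le_const[OF lim0]) (use bnd in blast)
  thus ?thesis unfolding I_def by simp
qed

lemma w_deriv: assumes t: "0 \<le> t" and i: "i \<in> {1..n}"
  shows "((\<lambda>s. w s i) has_real_derivative Bd (w t) i) (at t within {0..})"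
proof -
  have c: "continuous_on {0..t+1} (\<lambda>s. Bd (w s) i)" using good_cont[OF good_w _ i] t by simp
  have d: "((\<lambda>x. integral {0..x} (\<lambda>s. Bd (w s) i)) has_real_derivative Bd (w t) i) (at t within {0..t+1})"
    using integral_has_real_derivative[OF c] t by simp
  have d2: "((\<lambda>s. w s i) has_real_derivative Bd (w t) i) (at t within {0..t+1})"
    by (rule has_field_derivative_transform_within[OF d, of 1]) (use t w_int[OF _ i] in auto)
  have "at t within {0..} = at t within {0..t+1}"
    by (rule at_within_nhd[of t "{..<t+1}"]) auto
  thus ?thesis using d2 by simp
qed

lemma exists_sol: "yamabe_solution n F l0 edge bc w"
  unfolding yamabe_solution_def
proof (intro conjI ballI allI impI)
  fix i :: nat assume "i \<in> {1..n}" thus "w 0 i = 0" using good_w unfolding good_def by blast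
next
  fix t :: real assume "0 \<le> t"
  thus "admissible F l0 edge bc (w t)"
    using nonneg_adm[OF box_nonneg[OF good_box[OF good_w _ order.refl]]] by blast
next
  fix i t assume "i \<in> {1..n}" "(0::real) \<le> t"
  thus "((\<lambda>s. w s i) has_real_derivative Bd (w t) i) (at t within {0..})" by (intro w_deriv)
qed

end


context yam begin

lemma sol_conv:
  assumes sol: "yamabe_solution n F l0 edge bc u"
  shows "(\<forall>i\<in>{1..n}. ((\<lambda>t. Bd (u t) i) \<longlongrightarrow> 0) at_top) \<and>
         (\<forall>f\<in>F. \<forall>k<3. ((\<lambda>t. theta l0 edge bc (u t) f k) \<longlongrightarrow> 0) at_top) \<and>
         (\<forall>f\<in>F. \<forall>m<3. filterlim (\<lambda>t. edge_len l0 edge bc (u t) f m) at_top at_top)"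
proof -
  have u0: "\<And>i. i \<in> {1..n} \<Longrightarrow> u 0 i = 0" using sol unfolding yamabe_solution_def by blast
  have adm: "\<And>t. 0 \<le> t \<Longrightarrow> admissible F l0 edge bc (u t)" using sol unfolding yamabe_solution_def by blast
  have der: "\<And>i t. i \<in> {1..n} \<Longrightarrow> 0 \<le> t \<Longrightarrow> ((\<lambda>s. u s i) has_real_derivative Bd (u t) i) (at t within {0..})"
    using sol unfolding yamabe_solution_def by blast
  have cont: "continuous_on {0..} (\<lambda>s. u s i)" if i: "i \<in> {1..n}" for i
    unfolding continuous_on_eq_continuous_within
    using DERIV_continuous[OF der[OF i]] by auto
  have lin: "u b i - u a i \<ge> \<delta> * (b - a)"
    if i: "i \<in> {1..n}" and ab: "0 \<le> a" "a \<le> b" and dl: "\<And>t. 0 \<le> t \<Longrightarrow> \<delta> \<le> Bd (u t) i" for i a b \<delta>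
  proof -
    have "(\<lambda>x. u x i - \<delta> * x) a \<le> (\<lambda>x. u x i - \<delta> * x) b"
    proof (rule DERIV_nonneg_imp_increasing_open[OF ab(2)])
      fix x assume x: "a < x" "x < b"
      have "at x within {0..} = at x within UNIV"
        by (rule at_within_nhd[of x "{0<..}"]) (use x ab in auto)
      hence "((\<lambda>s. u s i) has_real_derivative Bd (u x) i) (at x)" using der[OF i, of x] x ab by simp
      hence "((\<lambda>s. u s i - \<delta> * s) has_real_derivative Bd (u x) i - \<delta> * 1) (at x)"
        by (intro derivative_intros) auto
      moreover have "Bd (u x) i - \<delta> * 1 \<ge> 0" using dl[of x] x ab by simp
      ultimately show "\<exists>y. ((\<lambda>s. u s i - \<delta> * s) has_real_derivative y) (at x) \<and> 0 \<le> y" by blast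
    next
      show "continuous_on {a..b} (\<lambda>x. u x i - \<delta> * x)"
        using continuous_on_subset[OF cont[OF i], of "{a..b}"] ab
        by (intro continuous_intros) auto
    qed
    thus ?thesis by (simp add: algebra_simps)
  qed
  have mono: "u a i \<le> u b i" if "i \<in> {1..n}" "0 \<le> a" "a \<le> b" for i a b
    using lin[OF that, of 0] B_nonneg[OF adm] by auto
  have nn: "nonneg (u t)" if "0 \<le> t" for t
    unfolding nonneg_def using mono[of _ 0 t] u0 that by force
  have unb: "\<exists>t\<ge>0. Z < u t i" if i: "i \<in> {1..n}" for i Z
  proof (rule ccontr)
    assume "\<not> ?thesis"
    hence le: "\<And>t. 0 \<le> t \<Longrightarrow> u t i \<le> Z" by force
    obtain f k where fk: "f \<in> F" "k < 3" "bc f k = i" using bc_surj[OF i] by blast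
    define \<delta> where "\<delta> = arcosh (1 + gam f k * exp (-4 * Z))"
    have gp: "gam f k > 0" using gam_pos[OF fk(1,2)] .
    have dpos: "\<delta> > 0" unfolding \<delta>_def using gp by simp
    have dl: "\<delta> \<le> Bd (u t) i" if t: "0 \<le> t" for t
    proof -
      have "exp (-4 * Z) \<le> exp (-4 * u t i)" using le[OF t] by simp
      hence "1 + gam f k * exp (-4 * Z) \<le> 1 + gam f k * exp (-4 * u t i)" using gp by simp
      hence "\<delta> \<le> arcosh (1 + gam f k * exp (-4 * u t i))" unfolding \<delta>_def using gp
        by (intro arcosh_mono_real) auto
      also have "\<dots> \<le> Bd (u t) i" using B_ge[OF adm[OF t] fk] .
      finally show ?thesis .
    qed
    define t where "t = (\<bar>Z\<bar> + 1) / \<delta>"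
    have t0: "0 \<le> t" unfolding t_def using dpos by simp
    have "u t i - u 0 i \<ge> \<delta> * (t - 0)" using lin[OF i order.refl t0 dl] .
    hence "u t i \<ge> \<bar>Z\<bar> + 1" using u0[OF i] dpos unfolding t_def by simp
    thus False using le[OF t0] by linarith
  qed
  have ulim: "filterlim (\<lambda>t. u t i) at_top at_top" if i: "i \<in> {1..n}" for i
    unfolding filterlim_at_top
  proof
    fix Z
    obtain t0 where t0: "t0 \<ge> 0" "Z < u t0 i" using unb[OF i] by blast
    show "eventually (\<lambda>t. Z \<le> u t i) at_top"
      unfolding eventually_at_top_linorder
      using mono[OF i t0(1)] t0(2) by (intro exI[of _ t0]) (auto intro: order.trans[OF less_imp_le])
  qed
  have elim: "((\<lambda>t. exp (-4 * u t i)) \<longlongrightarrow> 0) at_top" if i: "i \<in> {1..n}" for i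
  proof -
    have "filterlim (\<lambda>t. 4 * u t i) at_top at_top"
      by (rule filterlim_tendsto_pos_mult_at_top[OF tendsto_const _ ulim[OF i]]) simp
    hence "filterlim (\<lambda>t. - (4 * u t i)) at_bot at_top" by (simp add: filterlim_uminus_at_top)
    from filterlim_compose[OF exp_at_bot this] show ?thesis by simp
  qed
  have th: "((\<lambda>t. theta l0 edge bc (u t) f k) \<longlongrightarrow> 0) at_top" if fk: "f \<in> F" "k < 3" for f k
  proof (rule tendsto_sandwich)
    show "eventually (\<lambda>t. 0 \<le> theta l0 edge bc (u t) f k) at_top"
      unfolding eventually_at_top_linorder by (intro exI[of _ 0]) (auto intro: theta_nonneg adm fk)
    show "eventually (\<lambda>t. theta l0 edge bc (u t) f k \<le> arcosh (1 + Cu f k * exp (-4 * u t (bc f k)))) at_top"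
      unfolding eventually_at_top_linorder using theta_upper[OF nn fk] by (intro exI[of _ 0]) blast
    show "((\<lambda>t. 0) \<longlongrightarrow> 0) at_top" by simp
    have "((\<lambda>t. 1 + Cu f k * exp (-4 * u t (bc f k))) \<longlongrightarrow> 1 + Cu f k * 0) at_top"
      by (intro tendsto_add tendsto_mult tendsto_const elim bc_range fk)
    hence "((\<lambda>t. arcosh (1 + Cu f k * exp (-4 * u t (bc f k)))) \<longlongrightarrow> arcosh 1) at_top"
      by (intro tendsto_arcosh_strong) (auto intro!: always_eventually simp: Cu_nonneg[OF fk])
    thus "((\<lambda>t. arcosh (1 + Cu f k * exp (-4 * u t (bc f k)))) \<longlongrightarrow> 0) at_top" by simp
  qed
  have B0: "((\<lambda>t. Bd (u t) i) \<longlongrightarrow> 0) at_top" for i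
  proof -
    have "((\<lambda>t. \<Sum>f\<in>F. \<Sum>k<3. if bc f k = i then theta l0 edge bc (u t) f k else 0) \<longlongrightarrow> (\<Sum>f\<in>F. \<Sum>k<(3::nat). 0)) at_top"
    proof (intro tendsto_sum)
      fix f k assume "f \<in> F" "k \<in> {..<3::nat}"
      thus "((\<lambda>t. if bc f k = i then theta l0 edge bc (u t) f k else 0) \<longlongrightarrow> 0) at_top"
        using th[of f k] by (cases "bc f k = i") auto
    qed
    thus ?thesis unfolding bdry_len_def by simp
  qed
  have el: "filterlim (\<lambda>t. edge_len l0 edge bc (u t) f m) at_top at_top" if fm: "f \<in> F" "m < 3" for f m
  proof -
    define a where "a = bc f ((m + 1) mod 3)"
    have a: "a \<in> {1..n}" unfolding a_def using bc_range[OF fm(1)] by auto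
    have c1: "cc f m > 1" using cc_gt1[OF fm] .
    have "filterlim (\<lambda>t. 2 * u t a) at_top at_top"
      by (rule filterlim_tendsto_pos_mult_at_top[OF tendsto_const _ ulim[OF a]]) simp
    moreover have "eventually (\<lambda>t. 2 * u t a \<le> edge_len l0 edge bc (u t) f m) at_top"
      unfolding eventually_at_top_linorder
    proof (intro exI[of _ 0] allI impI)
      fix t :: real assume t: "0 \<le> t"
      have b: "bc f ((m + 2) mod 3) \<in> {1..n}" using bc_range[OF fm(1)] by auto
      have "exp (u t a) \<le> exp (u t a + u t (bc f ((m + 2) mod 3)))"
        using nn[OF t] b unfolding nonneg_def by simp
      hence "exp (u t a) * 1 \<le> exp (u t a + u t (bc f ((m + 2) mod 3))) * cc f m"
        using c1 by (intro mult_mono) auto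
      hence xge: "exp (u t a) \<le> X (u t) f m" unfolding X_def' a_def by simp
      have x1: "X (u t) f m \<ge> 1" using adm[OF t] fm unfolding admissible_def by force
      have "u t a = ln (exp (u t a))" by simp
      also have "\<dots> \<le> ln (X (u t) f m)" using xge x1 by (subst ln_le_cancel_iff) auto
      also have "\<dots> \<le> ln (X (u t) f m + sqrt ((X (u t) f m)^2 - 1))"
      proof -
        have sq: "0 \<le> sqrt ((X (u t) f m)^2 - 1)" using x1 by (simp add: one_le_power)
        have pos: "0 < X (u t) f m + sqrt ((X (u t) f m)^2 - 1)" using x1 sq by linarith
        have "X (u t) f m \<le> X (u t) f m + sqrt ((X (u t) f m)^2 - 1)" using sq by linarith
        thus ?thesis using pos x1 by (subst ln_le_cancel_iff) auto
      qed
      also have "\<dots> = arcosh (X (u t) f m)" using x1 by (simp add: arcosh_real_def)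
      finally show "2 * u t a \<le> edge_len l0 edge bc (u t) f m" unfolding edge_len_def by simp
    qed
    ultimately show ?thesis by (rule filterlim_at_top_mono)
  qed
  show ?thesis using B0 th el by blast
qed

end

theorem theorem3:
  fixes n :: nat and F :: "'f set" and E :: "'e set"
    and edge :: "'f \<Rightarrow> nat \<Rightarrow> 'e" and bc :: "'f \<Rightarrow> nat \<Rightarrow> nat" and l0 :: "'e \<Rightarrow> real"
  assumes "ideal_triangulation n F E edge bc"
    and "\<forall>e\<in>E. l0 e > 0"
  shows "(\<exists>w. yamabe_solution n F l0 edge bc w) \<and>
         (\<forall>w. yamabe_solution n F l0 edge bc w \<longrightarrow>
            (\<forall>i\<in>{1..n}. ((\<lambda>t. bdry_len F l0 edge bc (w t) i) \<longlongrightarrow> 0) at_top) \<and>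
            (\<forall>f\<in>F. \<forall>k<3. ((\<lambda>t. theta l0 edge bc (w t) f k) \<longlongrightarrow> 0) at_top) \<and>
            (\<forall>f\<in>F. \<forall>m<3. filterlim (\<lambda>t. edge_len l0 edge bc (w t) f m) at_top at_top))"
proof -
  interpret yam n F E edge bc l0 using assms by unfold_locales
  show ?thesis using exists_sol sol_conv by blast
qed

end
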